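(* For every integer $g\ge 1$ there exist polynomials $E_g,F_g\in\mathbb{C}[x]$ (with coefficients depending on $T$) such that $$w_{2,0}^{(g)}(x)=\frac{E_g(x)}{y(x)^{3g+3}}+\frac{F_g(x)}{y(x)^{3g+4}},$$ where $\deg E_g\le g+1$, $\deg F_g\le g+2$, $E_g(-x)=(-1)^{g+1}E_g(x)$, $F_g(-x)=(-1)^{g}F_g(x)$, and the coefficient of $x^{g+1}$ in $E_g$ is the negative of the coefficient of $x^{g+2}$ in $F_g$.
   Context: Fix $T>0$. Let $y(x)=\sqrt{x^2-4T}$ denote the branch analytic on $\mathbb{C}\setminus[-2\sqrt T,2\sqrt T]$ with $y(x)\sim x$ as $x\to\infty$; write $y_i=y(x_i)$. Let $\hbar$ be a parameter (in the application $\hbar=\sqrt{\kappa}-1/\sqrt{\kappa}$, where $\beta=2\kappa$ is the Dyson index of the Gaussian $\beta$-ensemble $\prod_{i<j}|\lambda_i-\lambda_j|^{2\kappa}e^{-\frac{N\kappa}{T}\sum_i\lambda_i^2/2}$). The functions $W_n^{(g)}(x_1,\dots,x_n)$, $n\ge1$, $g\ge0$ (the coefficients of the large-$N$ expansion of the connected correlators of that ensemble), are the symmetric functions determined recursively as follows: $W_1^{(0)}(x)=\tfrac12(x-y(x))$; by convention $W_n^{(-1)}=W_n^{(-2)}=0$; and for every $(n,g)$ with $n\ge1$, $g\ge0$, $(n,g)\neq(1,0)$, writing $I=(x_1,\dots,x_{n-1})$, $$y(x)W_n^{(g)}(x,I)=\hbar\,\partial_xW_n^{(g-1)}(x,I)+W_{n+1}^{(g-2)}(x,x,I)+{\sum_{J\subseteq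 I}}'\sum_{p=0}^{g}W_{|J|+1}^{(p)}(x,J)\,W_{n-|J|}^{(g-p)}(x,I\setminus J)+\sum_{i=1}^{n-1}\frac{\partial}{\partial x_i}\frac{W_{n-1}^{(g)}(x,I\setminus\{x_i\})-W_{n-1}^{(g)}(I)}{x-x_i},$$ where the primed double sum omits the two terms $(J=\emptyset,p=0)$ and $(J=I,p=g)$, and for $n=1$ the last sum is empty. These functions are rational in the $x_i$ and $y_i$, regular on the diagonals, and each $W_n^{(g)}$ is a polynomial in $\hbar$ of degree at most $g$ containing only powers $\hbar^j$ with $j\equiv g \pmod 2$. For $k\ge1$, $g\ge0$ and $0\le r\le g/2$, $w_{k,2r}^{(g)}(x)$ denotes the coefficient of $\hbar^{g-2r}$ in $W_k^{(g)}(x,\dots,x)$ (all $k$ arguments equal to $x$). Thus $w_{2,0}^{(g)}(x)$ is the coefficient of $\hbar^g$ in $W_2^{(g)}(x,x)$. *)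

theory Defs
  imports "HOL-Analysis.Analysis" "HOL-Computational_Algebra.Polynomial"
begin

definition cutdom :: "real \<Rightarrow> complex set" where
  "cutdom T = - (complex_of_real ` {-2 * sqrt T .. 2 * sqrt T})"

text \<open>The branch of sqrt(x^2 - 4T) analytic off the cut with y(x) ~ x at infinity.\<close>
definition ybr :: "real \<Rightarrow> complex \<Rightarrow> complex" where
  "ybr T x = x * csqrt (1 - 4 * complex_of_real T / x\<^sup>2)"

text \<open>Right-hand side of the loop equation.  W h g xs stands for W_n^{(g)}(xs)
  at parameter value hbar = h, where n = length xs.  Sub-lists J of I are encoded
  by their sets of positions S.\<close>
definition loop_rhs ::
  "(complex \<Rightarrow> nat \<Rightarrow> complex list \<Rightarrow> complex) \<Rightarrow> complex \<Rightarrow> nat \<Rightarrow> complex \<Rightarrow> complex list \<Rightarrow> complex" where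
  "loop_rhs W h g x I =
     (if 1 \<le> g then h * deriv (\<lambda>t. W h (g - 1) (t # I)) x else 0)
   + (if 2 \<le> g then W h (g - 2) (x # x # I) else 0)
   + (\<Sum>S\<in>Pow {..<length I}. \<Sum>p\<le>g.
        if (S = {} \<and> p = 0) \<or> (S = {..<length I} \<and> p = g) then 0
        else W h p (x # nths I S) * W h (g - p) (x # nths I ({..<length I} - S)))
   + (\<Sum>i<length I. deriv (\<lambda>t. (W h g (x # nths I (- {i})) - W h g (I[i := t])) / (x - t)) (I ! i))"

text \<open>W is the family of connected-correlator coefficients: initial condition,
  holomorphic (regular, including on diagonals) in each variable on the cut plane,
  and satisfying the loop equations (off the diagonals x = x_i).\<close>
definition is_corr_family :: "real \<Rightarrow> (complex \<Rightarrow> nat \<Rightarrow> complex list \<Rightarrow> complex) \<Rightarrow> bool" where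
  "is_corr_family T W \<longleftrightarrow>
     (\<forall>h. \<forall>x\<in>cutdom T. W h 0 [x] = (x - ybr T x) / 2)
   \<and> (\<forall>h g xs i. set xs \<subseteq> cutdom T \<and> i < length xs \<longrightarrow>
        (\<lambda>t. W h g (xs[i := t])) holomorphic_on cutdom T)
   \<and> (\<forall>h g x I. (length I, g) \<noteq> (0, 0) \<and> x \<in> cutdom T \<and> set I \<subseteq> cutdom T \<and> x \<notin> set I \<longrightarrow>
        ybr T x * W h g (x # I) = loop_rhs W h g x I)"

definition hcoeff :: "(complex \<Rightarrow> complex) \<Rightarrow> nat \<Rightarrow> complex" where
  "hcoeff f k = coeff (THE p. \<forall>h. f h = poly p h) k"

definition w20 :: "(complex \<Rightarrow> nat \<Rightarrow> complex list \<Rightarrow> complex) \<Rightarrow> nat \<Rightarrow> complex \<Rightarrow> complex" where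
  "w20 W g x = hcoeff (\<lambda>h. W h g [x, x]) g"

end

theory Submission
  imports Defs "HOL-Complex_Analysis.Complex_Analysis"
begin


definition isp :: "nat \<Rightarrow> (complex \<Rightarrow> complex) \<Rightarrow> bool" where
  "isp d f \<longleftrightarrow> (\<exists>p. degree p \<le> d \<and> f = poly p)"

lemma hcoeff_poly: "f = poly p \<Longrightarrow> hcoeff f k = coeff p k"
proof -
  assume f: "f = poly p"
  have "(THE q. \<forall>h. f h = poly q h) = p"
    by (rule the_equality) (auto simp: f poly_eq_poly_eq_iff[symmetric] fun_eq_iff)
  thus ?thesis by (simp add: hcoeff_def)
qed

lemma isp_const: "isp d (\<lambda>h. c)"
  unfolding isp_def by (rule exI[of _ "[:c:]"]) auto

lemma isp_mono: "isp d f \<Longrightarrow> d \<le> e \<Longrightarrow> isp e f"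
  unfolding isp_def by (metis order.trans)

lemma isp_add: "isp d f \<Longrightarrow> isp d g \<Longrightarrow> isp d (\<lambda>h. f h + g h)"
  unfolding isp_def apply clarify
  subgoal for p q by (rule exI[of _ "p+q"]) (auto intro: order.trans[OF degree_add_le_max])
  done

lemma isp_diff: "isp d f \<Longrightarrow> isp d g \<Longrightarrow> isp d (\<lambda>h. f h - g h)"
  unfolding isp_def apply clarify
  subgoal for p q by (rule exI[of _ "p-q"]) (auto intro: order.trans[OF degree_diff_le_max])
  done

lemma isp_cmult: "isp d f \<Longrightarrow> isp d (\<lambda>h. c * f h)"
  unfolding isp_def apply clarify
  subgoal for p by (rule exI[of _ "smult c p"]) auto
  done

lemma isp_multc: "isp d f \<Longrightarrow> isp d (\<lambda>h. f h * c)"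
  using isp_cmult[of d f c] by (simp add: mult.commute)

lemma isp_divc: "isp d f \<Longrightarrow> isp d (\<lambda>h. f h / c)"
  using isp_multc[of d f "inverse c"] by (simp add: divide_inverse)

lemma isp_mult: "isp d f \<Longrightarrow> isp e g \<Longrightarrow> isp (d + e) (\<lambda>h. f h * g h)"
  unfolding isp_def apply clarify
  subgoal for p q using degree_mult_le[of p q] by (intro exI[of _ "p*q"]) auto
  done

lemma isp_h: "isp d f \<Longrightarrow> isp (Suc d) (\<lambda>h. h * f h)"
  unfolding isp_def apply clarify
  subgoal for p using degree_mult_le[of "[:0,1:]" p] by (intro exI[of _ "[:0,1:]*p"]) auto
  done

lemma isp_sum: "finite A \<Longrightarrow> (\<And>a. a \<in> A \<Longrightarrow> isp d (f a)) \<Longrightarrow> isp d (\<lambda>h. \<Sum>a\<in>A. f a h)"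
proof (induction A rule: finite_induct)
  case empty thus ?case using isp_const[of d 0] by simp
next
  case (insert a A)
  have "isp d (\<lambda>h. f a h + (\<Sum>a\<in>A. f a h))"
    by (rule isp_add) (use insert in auto)
  thus ?case using insert by simp
qed

lemma isp_if: "(P \<Longrightarrow> isp d f) \<Longrightarrow> (\<not>P \<Longrightarrow> isp d g) \<Longrightarrow> isp d (\<lambda>h. if P then f h else g h)"
  by (cases P) auto


lemma hcoeff_isp_poly: "isp d f \<Longrightarrow> \<exists>p. degree p \<le> d \<and> f = poly p \<and> (\<forall>k. hcoeff f k = coeff p k)"
  unfolding isp_def using hcoeff_poly by blast

lemma hcoeff_add: "isp d f \<Longrightarrow> isp e g \<Longrightarrow> hcoeff (\<lambda>h. f h + g h) k = hcoeff f k + hcoeff g k"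
proof -
  assume "isp d f" "isp e g"
  then obtain p q where pq: "f = poly p" "g = poly q" unfolding isp_def by blast
  have "(\<lambda>h. f h + g h) = poly (p + q)" by (auto simp: pq fun_eq_iff)
  thus ?thesis using hcoeff_poly pq by simp
qed

lemma hcoeff_diff: "isp d f \<Longrightarrow> isp e g \<Longrightarrow> hcoeff (\<lambda>h. f h - g h) k = hcoeff f k - hcoeff g k"
proof -
  assume "isp d f" "isp e g"
  then obtain p q where pq: "f = poly p" "g = poly q" unfolding isp_def by blast
  have "(\<lambda>h. f h - g h) = poly (p - q)" by (auto simp: pq fun_eq_iff)
  thus ?thesis using hcoeff_poly pq by simp
qed

lemma hcoeff_cmult: "isp d f \<Longrightarrow> hcoeff (\<lambda>h. c * f h) k = c * hcoeff f k"
proof -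
  assume "isp d f"
  then obtain p where pq: "f = poly p" unfolding isp_def by blast
  have "(\<lambda>h. c * f h) = poly (smult c p)" by (auto simp: pq fun_eq_iff)
  thus ?thesis using hcoeff_poly pq by simp
qed

lemma hcoeff_divc: "isp d f \<Longrightarrow> hcoeff (\<lambda>h. f h / c) k = hcoeff f k / c"
  using hcoeff_cmult[of d f "inverse c" k] by (simp add: divide_inverse mult.commute)

lemma hcoeff_const: "hcoeff (\<lambda>h. c) k = (if k = 0 then c else 0)"
proof -
  have "(\<lambda>h. c) = poly [:c:]" by auto
  thus ?thesis using hcoeff_poly by (simp add: coeff_pCons split: nat.split)
qed

lemma hcoeff_h: "isp d f \<Longrightarrow> hcoeff (\<lambda>h. h * f h) (Suc k) = hcoeff f k"
proof -
  assume "isp d f"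
  then obtain p where pq: "f = poly p" unfolding isp_def by blast
  have "(\<lambda>h. h * f h) = poly (pCons 0 p)" by (auto simp: pq fun_eq_iff)
  thus ?thesis using hcoeff_poly pq by simp
qed

lemma hcoeff_high: "isp d f \<Longrightarrow> d < k \<Longrightarrow> hcoeff f k = 0"
proof -
  assume a: "isp d f" "d < k"
  then obtain p where "degree p \<le> d" "\<forall>k. hcoeff f k = coeff p k" using hcoeff_isp_poly by blast
  thus ?thesis using a(2) coeff_eq_0[of p k] by simp
qed

lemma coeff_mult_top:
  fixes p q :: "'a::idom poly"
  assumes "degree p \<le> d" "degree q \<le> e"
  shows "coeff (p * q) (d + e) = coeff p d * coeff q e"
proof (cases "degree p = d \<and> degree q = e")
  case True thus ?thesis using coeff_mult_degree_sum[of p q] by simp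
next
  case False
  hence "degree p < d \<or> degree q < e" using assms by auto
  hence "degree (p*q) < d + e" using degree_mult_le[of p q] assms by linarith
  hence "coeff (p*q) (d+e) = 0" by (simp add: coeff_eq_0)
  moreover have "coeff p d * coeff q e = 0" using \<open>degree p < d \<or> degree q < e\<close> by (auto simp: coeff_eq_0)
  ultimately show ?thesis by simp
qed

lemma hcoeff_mult: "isp d f \<Longrightarrow> isp e g \<Longrightarrow> hcoeff (\<lambda>h. f h * g h) (d + e) = hcoeff f d * hcoeff g e"
proof -
  assume "isp d f" "isp e g"
  then obtain p q where pq: "f = poly p" "g = poly q" "degree p \<le> d" "degree q \<le> e" unfolding isp_def by blast
  have "(\<lambda>h. f h * g h) = poly (p * q)" by (auto simp: pq fun_eq_iff)
  thus ?thesis using hcoeff_poly pq coeff_mult_top by simp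
qed

lemma hcoeff_sum: "finite A \<Longrightarrow> (\<And>a. a \<in> A \<Longrightarrow> isp d (f a)) \<Longrightarrow>
   hcoeff (\<lambda>h. \<Sum>a\<in>A. f a h) k = (\<Sum>a\<in>A. hcoeff (f a) k)"
proof (induction A rule: finite_induct)
  case empty thus ?case using hcoeff_const[of 0 k] by simp
next
  case (insert a A)
  have "hcoeff (\<lambda>h. f a h + (\<Sum>a\<in>A. f a h)) k = hcoeff (f a) k + hcoeff (\<lambda>h. \<Sum>a\<in>A. f a h) k"
    by (rule hcoeff_add[of d _ d]) (use insert in \<open>auto intro!: isp_sum\<close>)
  thus ?case using insert by simp
qed

lemma hcoeff_if: "hcoeff (\<lambda>h. if P then f h else g h) k = (if P then hcoeff f k else hcoeff g k)"
  by (cases P) auto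

definition lagp :: "nat \<Rightarrow> nat \<Rightarrow> complex poly" where
  "lagp d j = smult (1 / (\<Prod>i\<in>{..d}-{j}. (of_nat j - of_nat i))) (\<Prod>i\<in>{..d}-{j}. [:- of_nat i, 1:])"

lemma degree_lagp: "j \<le> d \<Longrightarrow> degree (lagp d j) \<le> d"
proof -
  assume "j \<le> d"
  have "degree (\<Prod>i\<in>{..d}-{j}. [:- of_nat i, 1:] :: complex poly) \<le> (\<Sum>i\<in>{..d}-{j}. degree ([:- of_nat i, 1:] :: complex poly))"
    using degree_prod_sum_le[of "{..d}-{j}" "\<lambda>i. [:- of_nat i, 1:] :: complex poly"] by (simp add: o_def)
  also have "\<dots> = card ({..d}-{j})" by simp
  also have "\<dots> \<le> d" using \<open>j \<le> d\<close> by (simp add: card_Diff_singleton)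
  finally show ?thesis unfolding lagp_def using degree_smult_le le_trans by blast
qed

lemma poly_lagp: "i \<le> d \<Longrightarrow> j \<le> d \<Longrightarrow> poly (lagp d j) (of_nat i) = (if i = j then 1 else 0)"
proof -
  assume ij: "i \<le> d" "j \<le> d"
  have P: "poly (\<Prod>i\<in>{..d}-{j}. [:- of_nat i, 1:]) z = (\<Prod>k\<in>{..d}-{j}. (z - of_nat k))" for z :: complex
    by (simp add: poly_prod)
  show ?thesis
  proof (cases "i = j")
    case True
    have "(\<Prod>k\<in>{..d}-{j}. (of_nat j - of_nat k :: complex)) \<noteq> 0" by (auto simp: prod_zero_iff)
    thus ?thesis using True by (simp add: lagp_def P)
  next
    case False
    have "(\<Prod>k\<in>{..d}-{j}. (of_nat i - of_nat k :: complex)) = 0"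
      using ij False by (intro prod_zero) auto
    thus ?thesis using False by (simp add: lagp_def P)
  qed
qed

lemma lagrange_interp:
  assumes "degree p \<le> d"
  shows "p = (\<Sum>j\<le>d. smult (poly p (of_nat j)) (lagp d j))"
proof (rule ccontr)
  define q where "q = p - (\<Sum>j\<le>d. smult (poly p (of_nat j)) (lagp d j))"
  assume "p \<noteq> (\<Sum>j\<le>d. smult (poly p (of_nat j)) (lagp d j))"
  hence q0: "q \<noteq> 0" by (simp add: q_def)
  have dq: "degree q \<le> d"
    unfolding q_def
    by (intro order.trans[OF degree_diff_le_max] max.boundedI assms degree_sum_le)
       (auto intro: order.trans[OF degree_smult_le] degree_lagp)
  have rt: "poly q (of_nat i) = 0" if i: "i \<in> {..d}" for i
  proof -
    have "poly (\<Sum>j\<le>d. smult (poly p (of_nat j)) (lagp d j)) (of_nat i) = (\<Sum>j\<le>d. poly p (of_nat j) * (if i = j then 1 else 0))"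
      using i by (auto simp: poly_sum poly_lagp intro!: sum.cong)
    also have "\<dots> = (\<Sum>j\<le>d. if i = j then poly p (of_nat j) else 0)" by (intro sum.cong) auto
    also have "\<dots> = poly p (of_nat i)" using i by (simp add: sum.delta[of "{..d}" i "\<lambda>j. poly p (of_nat j)", simplified])
    finally show "poly q (of_nat i) = 0" by (simp add: q_def)
  qed
  have roots: "of_nat ` {..d} \<subseteq> {x. poly q x = 0}" using rt by auto
  have c1: "card (of_nat ` {..d} :: complex set) = Suc d" by (simp add: card_image inj_on_def)
  have "card (of_nat ` {..d} :: complex set) \<le> card {x. poly q x = 0}"
    by (intro card_mono poly_roots_finite q0 roots)
  also have "\<dots> \<le> degree q" by (rule card_poly_roots_bound[OF q0])
  finally show False using c1 dq by simp
qed

lemma isp_lagrange: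
  assumes "isp d f"
  shows "f h = (\<Sum>j\<le>d. poly (lagp d j) h * f (of_nat j))"
proof -
  obtain p where p: "degree p \<le> d" "f = poly p" using assms unfolding isp_def by blast
  have "f h = poly (\<Sum>j\<le>d. smult (poly p (of_nat j)) (lagp d j)) h"
    using lagrange_interp[OF p(1)] p(2) by simp
  thus ?thesis by (simp add: poly_sum p(2) mult_ac)
qed

lemma isp_of_lagrange:
  assumes "\<And>h. f h = (\<Sum>j\<le>d. poly (lagp d j) h * c j)"
  shows "isp d f"
proof -
  have "f = poly (\<Sum>j\<le>d. smult (c j) (lagp d j))"
    by (auto simp: fun_eq_iff assms poly_sum mult_ac)
  moreover have "degree (\<Sum>j\<le>d. smult (c j) (lagp d j)) \<le> d"
    by (intro degree_sum_le) (auto intro: order.trans[OF degree_smult_le] degree_lagp)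
  ultimately show ?thesis unfolding isp_def by blast
qed

lemma hcoeff_lagrange:
  assumes "isp d f"
  shows "hcoeff f k = (\<Sum>j\<le>d. coeff (lagp d j) k * f (of_nat j))"
proof -
  have eq: "f h = poly (\<Sum>j\<le>d. smult (f (of_nat j)) (lagp d j)) h" for h
  proof -
    have "poly (\<Sum>j\<le>d. smult (f (of_nat j)) (lagp d j)) h = (\<Sum>j\<le>d. f (of_nat j) * poly (lagp d j) h)"
      by (simp add: poly_sum)
    also have "\<dots> = (\<Sum>j\<le>d. poly (lagp d j) h * f (of_nat j))" by (simp add: mult.commute)
    finally have X: "poly (\<Sum>j\<le>d. smult (f (of_nat j)) (lagp d j)) h = (\<Sum>j\<le>d. poly (lagp d j) h * f (of_nat j))" .
    show ?thesis unfolding X by (rule isp_lagrange[OF assms])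
  qed
  have "f = poly (\<Sum>j\<le>d. smult (f (of_nat j)) (lagp d j))" by (rule ext, rule eq)
  from hcoeff_poly[OF this] show ?thesis by (simp add: coeff_sum mult_ac)
qed


lemma open_cutdom: "open (cutdom T)"
proof -
  have "compact (complex_of_real ` {-2 * sqrt T .. 2 * sqrt T})"
    by (intro compact_continuous_image continuous_intros) auto
  thus ?thesis unfolding cutdom_def by (intro open_Compl compact_imp_closed)
qed

lemma cutdom_real: "T > 0 \<Longrightarrow> (x::real) \<in> {-2 * sqrt T .. 2 * sqrt T} \<Longrightarrow> complex_of_real x \<notin> cutdom T"
  unfolding cutdom_def by auto

lemma cutdom_nz: "T > 0 \<Longrightarrow> x \<in> cutdom T \<Longrightarrow> x \<noteq> 0"
  using cutdom_real[of T 0] by auto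

lemma sq_eq_real:
  fixes z :: complex
  assumes "z^2 = complex_of_real c" "c \<ge> 0"
  shows "z = complex_of_real (sqrt c) \<or> z = - complex_of_real (sqrt c)"
proof -
  have "(z - complex_of_real (sqrt c)) * (z + complex_of_real (sqrt c)) = z^2 - complex_of_real (sqrt c)^2"
    by (simp add: algebra_simps power2_eq_square)
  also have "complex_of_real (sqrt c)^2 = complex_of_real c" using assms(2)
    by (simp flip: of_real_power)
  finally have "(z - complex_of_real (sqrt c)) * (z + complex_of_real (sqrt c)) = 0" using assms(1) by simp
  hence "z - complex_of_real (sqrt c) = 0 \<or> z + complex_of_real (sqrt c) = 0" by simp
  thus ?thesis by (metis eq_neg_iff_add_eq_0 right_minus_eq)
qed

lemma ybr_sq: "x \<noteq> 0 \<Longrightarrow> ybr T x ^ 2 = x^2 - 4 * complex_of_real T"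
  unfolding ybr_def by (simp add: power_mult_distrib field_simps)

lemma sq_in_cut:
  assumes T: "T > 0" and x: "x \<in> cutdom T" and c: "x^2 = complex_of_real c" "0 \<le> c" "c \<le> 4 * T"
  shows False
proof -
  have "sqrt c \<le> 2 * sqrt T"
  proof -
    have "sqrt c \<le> sqrt (4 * T)" using c(3) by simp
    also have "sqrt (4*T) = 2 * sqrt T" by (simp add: real_sqrt_mult)
    finally show ?thesis .
  qed
  moreover have "sqrt c \<ge> 0" using c(2) by simp
  moreover have "sqrt T \<ge> 0" using T by simp
  ultimately have "sqrt c \<in> {-2 * sqrt T .. 2 * sqrt T}" "- sqrt c \<in> {-2 * sqrt T .. 2 * sqrt T}"
    unfolding atLeastAtMost_iff by linarith+
  thus False using sq_eq_real[OF c(1,2)] x cutdom_real[OF T] by fastforce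
qed

lemma ybr_nz: "T > 0 \<Longrightarrow> x \<in> cutdom T \<Longrightarrow> ybr T x \<noteq> 0"
proof
  assume T: "T > 0" and x: "x \<in> cutdom T" and y: "ybr T x = 0"
  have "x^2 - 4 * complex_of_real T = 0" using ybr_sq[OF cutdom_nz[OF T x], of T] y by simp
  hence "x^2 = complex_of_real (4*T)" by simp
  thus False using sq_in_cut[OF T x, of "4*T"] T by simp
qed

lemma ybr_holo: assumes T: "T > 0" shows "ybr T holomorphic_on cutdom T"
  unfolding ybr_def
proof (intro holomorphic_intros)
  fix z assume z: "z \<in> cutdom T"
  have z0: "z \<noteq> 0" using cutdom_nz[OF T z] .
  show "z^2 \<noteq> 0" using z0 by simp
  show "1 - 4 * complex_of_real T / z\<^sup>2 \<notin> \<real>\<^sub>\<le>\<^sub>0"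
  proof
    assume "1 - 4 * complex_of_real T / z\<^sup>2 \<in> \<real>\<^sub>\<le>\<^sub>0"
    then obtain r where r: "1 - 4 * complex_of_real T / z\<^sup>2 = complex_of_real r" "r \<le> 0"
      by (auto simp: nonpos_Reals_def)
    have "4 * complex_of_real T / z\<^sup>2 = complex_of_real (1 - r)" using r(1) by (simp add: algebra_simps)
    hence "z^2 = complex_of_real (4 * T / (1 - r))" using z0 r(2)
      by (simp add: field_simps)
    moreover have "4 * T / (1 - r) \<le> 4 * T" using r(2) T by (simp add: field_simps mult_nonneg_nonpos)
    moreover have "0 \<le> 4 * T / (1 - r)" using r(2) T by simp
    ultimately show False using sq_in_cut[OF T z] by blast
  qed
qed

lemma ybr_deriv:
  assumes T: "T > 0" and x: "x \<in> cutdom T"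
  shows "(ybr T has_field_derivative x / ybr T x) (at x)" "deriv (ybr T) x = x / ybr T x"
proof -
  have d: "(ybr T has_field_derivative deriv (ybr T) x) (at x)"
    using holomorphic_derivI[OF ybr_holo[OF T] open_cutdom x] .
  have "((\<lambda>t. ybr T t ^ 2) has_field_derivative 2 * ybr T x * deriv (ybr T) x) (at x)"
    using DERIV_power[OF d, of 2] by (simp add: mult_ac)
  moreover have "((\<lambda>t. ybr T t ^ 2) has_field_derivative 2 * x) (at x)"
  proof -
    have "((\<lambda>t. t ^ 2 - 4 * complex_of_real T) has_field_derivative 2 * x) (at x)"
      by (auto intro!: derivative_eq_intros)
    moreover have e: "eventually (\<lambda>t. t ^ 2 - 4 * complex_of_real T = ybr T t ^ 2) (nhds x)"
      using eventually_nhds_in_open[OF open_cutdom x] 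
      by eventually_elim (use cutdom_nz[OF T] ybr_sq in auto)
    ultimately show ?thesis using DERIV_cong_ev[OF refl e refl] by blast
  qed
  ultimately have "2 * ybr T x * deriv (ybr T) x = 2 * x" using DERIV_unique by blast
  hence "deriv (ybr T) x = x / ybr T x" using ybr_nz[OF T x] by (simp add: field_simps)
  thus "deriv (ybr T) x = x / ybr T x" "(ybr T has_field_derivative x / ybr T x) (at x)" using d by auto
qed

lemma deriv_lincomb:
  assumes S: "open S" "t0 \<in> S" and A: "finite A" and G: "\<And>j. j \<in> A \<Longrightarrow> G j holomorphic_on S"
    and f: "\<And>t. t \<in> S \<Longrightarrow> f t = (\<Sum>j\<in>A. c j * G j t)"
  shows "deriv f t0 = (\<Sum>j\<in>A. c j * deriv (G j) t0)" "f holomorphic_on S"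
proof -
  have e: "eventually (\<lambda>t. (\<Sum>j\<in>A. c j * G j t) = f t) (nhds t0)"
    using eventually_nhds_in_open[OF S] by eventually_elim (use f in auto)
  have "((\<lambda>t. \<Sum>j\<in>A. c j * G j t) has_field_derivative (\<Sum>j\<in>A. c j * deriv (G j) t0)) (at t0)"
    by (intro DERIV_sum DERIV_cmult holomorphic_derivI[OF G S(1,2)])
  hence "(f has_field_derivative (\<Sum>j\<in>A. c j * deriv (G j) t0)) (at t0)"
    using DERIV_cong_ev[OF refl e refl] by blast
  thus "deriv f t0 = (\<Sum>j\<in>A. c j * deriv (G j) t0)" by (rule DERIV_imp_deriv)
  have "(\<lambda>t. \<Sum>j\<in>A. c j * G j t) holomorphic_on S" by (intro holomorphic_intros G)
  thus "f holomorphic_on S" by (rule holomorphic_transform) (use f in auto)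
qed

lemma fam_deriv:
  assumes S: "open S" "t0 \<in> S" and F: "\<And>h. F h holomorphic_on S" and I: "\<And>t. t \<in> S \<Longrightarrow> isp d (\<lambda>h. F h t)"
  shows "isp d (\<lambda>h. deriv (F h) t0)"
    and "hcoeff (\<lambda>h. deriv (F h) t0) k = deriv (\<lambda>t. hcoeff (\<lambda>h. F h t) k) t0"
    and "(\<lambda>t. hcoeff (\<lambda>h. F h t) k) holomorphic_on S"
proof -
  have D: "deriv (F h) t0 = (\<Sum>j\<le>d. poly (lagp d j) h * deriv (F (of_nat j)) t0)" for h
    by (rule deriv_lincomb(1)[OF S]) (use F isp_lagrange[OF I] in auto)
  show "isp d (\<lambda>h. deriv (F h) t0)" by (rule isp_of_lagrange[OF D])
  have Hc: "hcoeff (\<lambda>h. F h t) k = (\<Sum>j\<le>d. coeff (lagp d j) k * F (of_nat j) t)" if "t \<in> S" for t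
    by (rule hcoeff_lagrange[OF I[OF that]])
  have "deriv (\<lambda>t. hcoeff (\<lambda>h. F h t) k) t0 = (\<Sum>j\<le>d. coeff (lagp d j) k * deriv (F (of_nat j)) t0)"
    by (rule deriv_lincomb(1)[OF S]) (use F Hc in auto)
  moreover have "hcoeff (\<lambda>h. deriv (F h) t0) k = (\<Sum>j\<le>d. coeff (lagp d j) k * deriv (F (of_nat j)) t0)"
    by (rule hcoeff_lagrange[OF isp_of_lagrange[OF D]])
  ultimately show "hcoeff (\<lambda>h. deriv (F h) t0) k = deriv (\<lambda>t. hcoeff (\<lambda>h. F h t) k) t0" by simp
  show "(\<lambda>t. hcoeff (\<lambda>h. F h t) k) holomorphic_on S"
    by (rule deriv_lincomb(2)[OF S]) (use F Hc in auto)
qed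

lemma eq_by_limit:
  fixes f g :: "complex \<Rightarrow> complex"
  assumes "isCont f x" "isCont g x" "eventually (\<lambda>t. f t = g t) (at x)"
  shows "f x = g x"
proof -
  have "(f \<longlongrightarrow> f x) (at x)" using assms(1) isCont_def by blast
  moreover have "(f \<longlongrightarrow> g x) (at x)"
    using assms(2) isCont_def tendsto_cong[OF assms(3)] by blast
  ultimately show ?thesis using LIM_unique by blast
qed

lemma eventually_avoid:
  fixes S F :: "complex set"
  assumes "open S" "x \<in> S" "finite F"
  shows "eventually (\<lambda>t. t \<in> S \<and> t \<notin> F) (at x)"
proof -
  have "open (S - (F - {x}))" using assms finite_imp_closed[of "F - {x}"] by (intro open_Diff) auto
  hence "eventually (\<lambda>t. t \<in> S - (F - {x})) (at x)" using assms(2) by (intro eventually_at_in_open') auto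
  moreover have "eventually (\<lambda>t. t \<noteq> x) (at x)" by (simp add: eventually_at_filter)
  ultimately show ?thesis by eventually_elim auto
qed


lemma corr_init: "is_corr_family T W \<Longrightarrow> x \<in> cutdom T \<Longrightarrow> W h 0 [x] = (x - ybr T x) / 2"
  unfolding is_corr_family_def by blast

lemma corr_holo: "is_corr_family T W \<Longrightarrow> set xs \<subseteq> cutdom T \<Longrightarrow> i < length xs \<Longrightarrow>
    (\<lambda>t. W h g (xs[i := t])) holomorphic_on cutdom T"
  unfolding is_corr_family_def by blast

lemma corr_loop: "is_corr_family T W \<Longrightarrow> (length I, g) \<noteq> (0, 0) \<Longrightarrow> x \<in> cutdom T \<Longrightarrow> set I \<subseteq> cutdom T \<Longrightarrow> x \<notin> set I \<Longrightarrow>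
    ybr T x * W h g (x # I) = loop_rhs W h g x I"
  unfolding is_corr_family_def by blast

lemma corr_holo0: "is_corr_family T W \<Longrightarrow> set I \<subseteq> cutdom T \<Longrightarrow> (\<lambda>t. W h g (t # I)) holomorphic_on cutdom T"
proof -
  assume a: "is_corr_family T W" "set I \<subseteq> cutdom T"
  show ?thesis
  proof (cases "cutdom T = {}")
    case True thus ?thesis by (simp add: holomorphic_on_def)
  next
    case False
    then obtain x where x: "x \<in> cutdom T" by blast
    have "(\<lambda>t. W h g ((x # I)[0 := t])) holomorphic_on cutdom T"
      by (rule corr_holo[OF a(1)]) (use a x in auto)
    thus ?thesis by simp
  qed
qed

lemma isCont_holo: "f holomorphic_on S \<Longrightarrow> open S \<Longrightarrow> x \<in> S \<Longrightarrow> isCont f x"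
  using holomorphic_on_imp_continuous_on continuous_on_eq_continuous_at by blast

lemma card_lt_sub: "S \<subseteq> {..<n} \<Longrightarrow> S \<noteq> {..<n} \<Longrightarrow> card S < n"
  using psubset_card_mono[of "{..<n}" S] by auto

lemma length_nths_sub: "S \<subseteq> {..<length I} \<Longrightarrow> length (nths I S) = card S"
proof -
  assume "S \<subseteq> {..<length I}"
  hence "{i. i < length I \<and> i \<in> S} = S" by auto
  thus ?thesis by (simp add: length_nths)
qed

lemma W_isp:
  assumes T: "T > 0" and W: "is_corr_family T W"
  shows "set xs \<subseteq> cutdom T \<Longrightarrow> xs \<noteq> [] \<Longrightarrow> isp g (\<lambda>h. W h g xs)"
proof (induction "2*g + length xs" arbitrary: g xs rule: less_induct)
  case less
  obtain x I where xs: "xs = x # I" using less.prems(2) by (cases xs) auto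
  have Icut: "set I \<subseteq> cutdom T" using less.prems(1) xs by auto
  have xcut: "x \<in> cutdom T" using less.prems(1) xs by auto
  define n where "n = length I"
  have IH: "\<And>g' ys. 2*g' + length ys < 2*g + Suc n \<Longrightarrow> set ys \<subseteq> cutdom T \<Longrightarrow> ys \<noteq> [] \<Longrightarrow> isp g' (\<lambda>h. W h g' ys)"
    using less.hyps xs n_def by auto
  have offd: "isp g (\<lambda>h. W h g (t # I))" if t: "t \<in> cutdom T" "t \<notin> set I" for t
  proof (cases "(length I, g) = (0, 0)")
    case True
    hence "I = []" "g = 0" by auto
    hence "(\<lambda>h. W h g (t # I)) = (\<lambda>h. (t - ybr T t) / 2)" using corr_init[OF W t(1)] by auto
    thus ?thesis using isp_const by simp
  next
    case False
    have eq: "W h g (t # I) = loop_rhs W h g t I / ybr T t" for h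
      using corr_loop[OF W False t(1) Icut t(2), of h] ybr_nz[OF T t(1)] by (simp add: field_simps)
    have t1: "isp g (\<lambda>h. if 1 \<le> g then h * deriv (\<lambda>s. W h (g - 1) (s # I)) t else 0)"
    proof (rule isp_if)
      assume g1: "1 \<le> g"
      have "isp (g - 1) (\<lambda>h. deriv (\<lambda>s. W h (g - 1) (s # I)) t)"
      proof (rule fam_deriv(1)[OF open_cutdom t(1)])
        show "(\<lambda>s. W h (g - 1) (s # I)) holomorphic_on cutdom T" for h by (rule corr_holo0[OF W Icut])
        show "isp (g - 1) (\<lambda>h. W h (g - 1) (s # I))" if "s \<in> cutdom T" for s
          by (rule IH) (use g1 that Icut n_def in auto)
      qed
      from isp_h[OF this] show "isp g (\<lambda>h. h * deriv (\<lambda>s. W h (g - 1) (s # I)) t)" using g1 by simp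
    qed (rule isp_const)
    have t2: "isp g (\<lambda>h. if 2 \<le> g then W h (g - 2) (t # t # I) else 0)"
    proof (rule isp_if)
      assume g2: "2 \<le> g"
      have "isp (g - 2) (\<lambda>h. W h (g - 2) (t # t # I))"
        by (rule IH) (use g2 t Icut n_def in auto)
      thus "isp g (\<lambda>h. W h (g - 2) (t # t # I))" by (rule isp_mono) simp
    qed (rule isp_const)
    have t3: "isp g (\<lambda>h. \<Sum>S\<in>Pow {..<length I}. \<Sum>p\<le>g.
        if (S = {} \<and> p = 0) \<or> (S = {..<length I} \<and> p = g) then 0
        else W h p (t # nths I S) * W h (g - p) (t # nths I ({..<length I} - S)))"
    proof (intro isp_sum finite_Pow_iff[THEN iffD2] finite_lessThan finite_atMost isp_if isp_const)
      fix S p assume S: "S \<in> Pow {..<length I}" and p: "p \<in> {..g}"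
        and ne: "\<not> ((S = {} \<and> p = 0) \<or> (S = {..<length I} \<and> p = g))"
      have S': "S \<subseteq> {..<n}" using S n_def by auto
      have cS: "card S \<le> n" using card_mono[OF _ S'] by simp
      have l1: "length (nths I S) = card S" using S' n_def length_nths_sub by auto
      have l2: "length (nths I ({..<n} - S)) = n - card S"
        using length_nths_sub[of "{..<n} - S" I] S' n_def card_Diff_subset[OF finite_subset[OF S'] S'] by auto
      have m1: "2 * p + length (t # nths I S) < 2 * g + Suc n"
      proof (cases "p = g")
        case True
        hence "S \<noteq> {..<n}" using ne n_def by auto
        hence "card S < n" using card_lt_sub[OF S'] by simp
        thus ?thesis using True l1 by simp
      next
        case False thus ?thesis using p l1 cS by auto
      qed
      have m2: "2 * (g - p) + length (t # nths I ({..<n} - S)) < 2 * g + Suc n"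
      proof (cases "p = 0")
        case True
        hence "S \<noteq> {}" using ne by auto
        hence "card S > 0" using S' finite_subset[OF S'] by (auto simp: card_gt_0_iff)
        thus ?thesis using True l2 cS by simp
      next
        case False thus ?thesis using p l2 cS by auto
      qed
      have A: "isp p (\<lambda>h. W h p (t # nths I S))"
        by (rule IH[OF m1]) (use t(1) Icut set_nths_subset[of I S] in auto)
      have B: "isp (g - p) (\<lambda>h. W h (g - p) (t # nths I ({..<length I} - S)))"
        by (rule IH) (use m2 n_def t(1) Icut set_nths_subset[of I "{..<length I} - S"] in auto)
      from isp_mult[OF A B] show "isp g (\<lambda>h. W h p (t # nths I S) * W h (g - p) (t # nths I ({..<length I} - S)))"
        using p by simp
    qed
    have t4: "isp g (\<lambda>h. \<Sum>i<length I. deriv (\<lambda>s. (W h g (t # nths I (- {i})) - W h g (I[i := s])) / (t - s)) (I ! i))"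
    proof (intro isp_sum finite_lessThan)
      fix i assume i: "i \<in> {..<length I}"
      have Ii: "I ! i \<in> cutdom T - {t}" using i Icut t(2) nth_mem[of i I] by auto
      have oS: "open (cutdom T - {t})" by (intro open_Diff open_cutdom) auto
      show "isp g (\<lambda>h. deriv (\<lambda>s. (W h g (t # nths I (- {i})) - W h g (I[i := s])) / (t - s)) (I ! i))"
      proof (rule fam_deriv(1)[OF oS Ii])
        fix h
        have "(\<lambda>s. W h g (I[i := s])) holomorphic_on cutdom T"
          by (rule corr_holo[OF W Icut]) (use i in auto)
        hence H: "(\<lambda>s. W h g (I[i := s])) holomorphic_on cutdom T - {t}"
          by (rule holomorphic_on_subset) auto
        show "(\<lambda>s. (W h g (t # nths I (- {i})) - W h g (I[i := s])) / (t - s)) holomorphic_on cutdom T - {t}"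
          by (intro holomorphic_intros H) auto
      next
        fix s assume s: "s \<in> cutdom T - {t}"
        have len: "length (nths I (- {i})) = n - 1"
        proof -
          have "{j. j < length I \<and> j \<in> - {i}} = {..<n} - {i}" using n_def by auto
          thus ?thesis using i n_def by (simp add: length_nths)
        qed
        have A: "isp g (\<lambda>h. W h g (t # nths I (- {i})))"
          by (rule IH) (use len i n_def t(1) Icut set_nths_subset[of I "- {i}"] in auto)
        have B: "isp g (\<lambda>h. W h g (I[i := s]))"
          by (rule IH) (use i n_def s Icut set_update_subset_insert[of I i s] in auto)
        show "isp g (\<lambda>h. (W h g (t # nths I (- {i})) - W h g (I[i := s])) / (t - s))"
          by (intro isp_divc isp_diff A B)
      qed
    qed
    have "isp g (\<lambda>h. loop_rhs W h g t I)"
      unfolding loop_rhs_def by (intro isp_add t1 t2 t3 t4)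
    hence "isp g (\<lambda>h. loop_rhs W h g t I / ybr T t)" by (rule isp_divc)
    thus ?thesis using eq by simp
  qed
  show ?case
  proof (cases "x \<in> set I")
    case False thus ?thesis using offd[OF xcut] xs by simp
  next
    case True
    have L: "W h g (x # I) = (\<Sum>j\<le>g. poly (lagp g j) h * W (of_nat j) g (x # I))" for h
    proof (rule eq_by_limit[where f="\<lambda>t. W h g (t # I)" and g="\<lambda>t. \<Sum>j\<le>g. poly (lagp g j) h * W (of_nat j) g (t # I)"])
      show "isCont (\<lambda>t. W h g (t # I)) x" by (rule isCont_holo[OF corr_holo0[OF W Icut] open_cutdom xcut])
      have "(\<lambda>t. \<Sum>j\<le>g. poly (lagp g j) h * W (of_nat j) g (t # I)) holomorphic_on cutdom T"
        by (intro holomorphic_intros corr_holo0[OF W Icut])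
      thus "isCont (\<lambda>t. \<Sum>j\<le>g. poly (lagp g j) h * W (of_nat j) g (t # I)) x"
        by (rule isCont_holo[OF _ open_cutdom xcut])
      show "eventually (\<lambda>t. W h g (t # I) = (\<Sum>j\<le>g. poly (lagp g j) h * W (of_nat j) g (t # I))) (at x)"
        using eventually_avoid[OF open_cutdom xcut finite_set[of I]]
        by eventually_elim (rule isp_lagrange[OF offd], auto)
    qed
    have "isp g (\<lambda>h. W h g (x # I))" by (rule isp_of_lagrange[OF L])
    thus ?thesis using xs by simp
  qed
qed


definition u1 :: "(complex \<Rightarrow> nat \<Rightarrow> complex list \<Rightarrow> complex) \<Rightarrow> nat \<Rightarrow> complex \<Rightarrow> complex" where
  "u1 W g x = hcoeff (\<lambda>h. W h g [x]) g"
definition u2 :: "(complex \<Rightarrow> nat \<Rightarrow> complex list \<Rightarrow> complex) \<Rightarrow> nat \<Rightarrow> complex \<Rightarrow> complex \<Rightarrow> complex" where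
  "u2 W g a b = hcoeff (\<lambda>h. W h g [a, b]) g"

lemma cutdom_ii: "\<i> \<in> cutdom T"
  unfolding cutdom_def using complex_eq_iff by fastforce

context
  fixes T :: real and W
  assumes T: "T > 0" and W: "is_corr_family T W"
begin

lemma isp1: "x \<in> cutdom T \<Longrightarrow> isp g (\<lambda>h. W h g [x])"
  by (rule W_isp[OF T W]) auto
lemma isp2: "a \<in> cutdom T \<Longrightarrow> b \<in> cutdom T \<Longrightarrow> isp g (\<lambda>h. W h g [a, b])"
  by (rule W_isp[OF T W]) auto
lemma isp3: "a \<in> cutdom T \<Longrightarrow> b \<in> cutdom T \<Longrightarrow> c \<in> cutdom T \<Longrightarrow> isp g (\<lambda>h. W h g [a, b, c])"
  by (rule W_isp[OF T W]) auto

lemma u1_holo: "u1 W g holomorphic_on cutdom T"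
proof -
  have "(\<lambda>t. hcoeff (\<lambda>h. W h g [t]) g) holomorphic_on cutdom T"
    by (rule fam_deriv(3)[OF open_cutdom cutdom_ii]) (use corr_holo0[OF W, of "[]"] isp1 in auto)
  thus ?thesis unfolding u1_def[abs_def] .
qed

lemma u2_holo: "b \<in> cutdom T \<Longrightarrow> (\<lambda>a. u2 W g a b) holomorphic_on cutdom T"
proof -
  assume b: "b \<in> cutdom T"
  have "(\<lambda>t. hcoeff (\<lambda>h. W h g [t, b]) g) holomorphic_on cutdom T"
    by (rule fam_deriv(3)[OF open_cutdom cutdom_ii]) (use corr_holo0[OF W, of "[b]"] isp2 b in auto)
  thus ?thesis unfolding u2_def .
qed

lemma u1_0: "x \<in> cutdom T \<Longrightarrow> u1 W 0 x = (x - ybr T x) / 2"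
proof -
  assume x: "x \<in> cutdom T"
  have "(\<lambda>h. W h 0 [x]) = (\<lambda>h. (x - ybr T x) / 2)" using corr_init[OF W x] by auto
  thus ?thesis unfolding u1_def using hcoeff_const[of "(x - ybr T x) / 2" 0] by simp
qed

lemma hc_deriv1:
  assumes x: "x \<in> cutdom T" and I: "set I \<subseteq> cutdom T"
  shows "isp g (\<lambda>h. deriv (\<lambda>t. W h g (t # I)) x)"
    "hcoeff (\<lambda>h. deriv (\<lambda>t. W h g (t # I)) x) k = deriv (\<lambda>t. hcoeff (\<lambda>h. W h g (t # I)) k) x"
proof -
  have H: "\<And>h. (\<lambda>t. W h g (t # I)) holomorphic_on cutdom T" by (rule corr_holo0[OF W I])
  have P: "\<And>t. t \<in> cutdom T \<Longrightarrow> isp g (\<lambda>h. W h g (t # I))" by (rule W_isp[OF T W]) (use I in auto)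
  show "isp g (\<lambda>h. deriv (\<lambda>t. W h g (t # I)) x)" by (rule fam_deriv(1)[OF open_cutdom x H P])
  show "hcoeff (\<lambda>h. deriv (\<lambda>t. W h g (t # I)) x) k = deriv (\<lambda>t. hcoeff (\<lambda>h. W h g (t # I)) k) x"
    by (rule fam_deriv(2)[OF open_cutdom x H P])
qed

lemma hc_term1:
  assumes x: "x \<in> cutdom T" and I: "set I \<subseteq> cutdom T"
  shows "isp g (\<lambda>h. if 1 \<le> g then h * deriv (\<lambda>t. W h (g - 1) (t # I)) x else 0)"
    "hcoeff (\<lambda>h. if 1 \<le> g then h * deriv (\<lambda>t. W h (g - 1) (t # I)) x else 0) g =
     (if 1 \<le> g then deriv (\<lambda>t. hcoeff (\<lambda>h. W h (g - 1) (t # I)) (g - 1)) x else 0)"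
proof -
  show "isp g (\<lambda>h. if 1 \<le> g then h * deriv (\<lambda>t. W h (g - 1) (t # I)) x else 0)"
  proof (rule isp_if)
    assume g: "1 \<le> g"
    from isp_h[OF hc_deriv1(1)[OF x I, of "g - 1"]] g
    show "isp g (\<lambda>h. h * deriv (\<lambda>t. W h (g - 1) (t # I)) x)" by simp
  qed (rule isp_const)
  show "hcoeff (\<lambda>h. if 1 \<le> g then h * deriv (\<lambda>t. W h (g - 1) (t # I)) x else 0) g =
     (if 1 \<le> g then deriv (\<lambda>t. hcoeff (\<lambda>h. W h (g - 1) (t # I)) (g - 1)) x else 0)"
  proof (cases "1 \<le> g")
    case True
    have "hcoeff (\<lambda>h. h * deriv (\<lambda>t. W h (g - 1) (t # I)) x) (Suc (g - 1)) =
          hcoeff (\<lambda>h. deriv (\<lambda>t. W h (g - 1) (t # I)) x) (g - 1)"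
      by (rule hcoeff_h[OF hc_deriv1(1)[OF x I]])
    thus ?thesis using True hc_deriv1(2)[OF x I] by simp
  next
    case False thus ?thesis using hcoeff_const[of 0 g] by simp
  qed
qed

lemma hc_term2:
  assumes "set L \<subseteq> cutdom T" "L \<noteq> []"
  shows "isp g (\<lambda>h. if 2 \<le> g then W h (g - 2) L else 0)"
    "hcoeff (\<lambda>h. if 2 \<le> g then W h (g - 2) L else 0) g = 0"
proof -
  show "isp g (\<lambda>h. if 2 \<le> g then W h (g - 2) L else 0)"
    by (intro isp_if isp_const isp_mono[OF W_isp[OF T W assms]]) auto
  show "hcoeff (\<lambda>h. if 2 \<le> g then W h (g - 2) L else 0) g = 0"
  proof (cases "2 \<le> g")
    case True thus ?thesis using hcoeff_high[OF W_isp[OF T W assms], of "g - 2" g] by simp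
  next
    case False thus ?thesis using hcoeff_const[of 0 g] by simp
  qed
qed

lemma u1_rec:
  assumes x: "x \<in> cutdom T" and g: "1 \<le> g"
  shows "ybr T x * u1 W g x = deriv (u1 W (g - 1)) x + (\<Sum>p\<in>{1..<g}. u1 W p x * u1 W (g - p) x)"
proof -
  have L: "ybr T x * W h g [x] = loop_rhs W h g x []" for h
    by (rule corr_loop[OF W]) (use g x in auto)
  define A where "A = (\<lambda>h. if 1 \<le> g then h * deriv (\<lambda>t. W h (g - 1) [t]) x else 0)"
  define B where "B = (\<lambda>h. if 2 \<le> g then W h (g - 2) [x, x] else 0)"
  define C where "C = (\<lambda>h. \<Sum>p\<le>g. if p = 0 \<or> p = g then 0 else W h p [x] * W h (g - p) [x])"
  have R: "loop_rhs W h g x [] = A h + B h + C h" for h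
    unfolding loop_rhs_def A_def B_def C_def by (simp cong: if_cong)
  have iA: "isp g A" and hA: "hcoeff A g = deriv (u1 W (g - 1)) x"
    using hc_term1[OF x, of "[]" g] g unfolding A_def u1_def[abs_def] by auto
  have iB: "isp g B" and hB: "hcoeff B g = 0" using hc_term2[of "[x, x]" g] x unfolding B_def by auto
  have iC': "isp g (\<lambda>h. if p = 0 \<or> p = g then 0 else W h p [x] * W h (g - p) [x])" if "p \<in> {..g}" for p
    using isp_mult[OF isp1[OF x, of p] isp1[OF x, of "g - p"]] that by (intro isp_if isp_const) auto
  have iC: "isp g C" unfolding C_def by (intro isp_sum iC') auto
  have hC: "hcoeff C g = (\<Sum>p\<le>g. if p = 0 \<or> p = g then 0 else u1 W p x * u1 W (g - p) x)"
    unfolding C_def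
  proof (subst hcoeff_sum[OF _ iC'], simp, simp, intro sum.cong refl)
    fix p assume p: "p \<in> {..g}"
    show "hcoeff (\<lambda>h. if p = 0 \<or> p = g then 0 else W h p [x] * W h (g - p) [x]) g =
      (if p = 0 \<or> p = g then 0 else u1 W p x * u1 W (g - p) x)"
      using hcoeff_const[of 0 g] hcoeff_mult[OF isp1[OF x, of p] isp1[OF x, of "g - p"]] p g
      unfolding u1_def by (auto simp: hcoeff_if)
  qed
  have "(\<Sum>p\<le>g. if p = 0 \<or> p = g then 0 else u1 W p x * u1 W (g - p) x) = (\<Sum>p\<in>{1..<g}. u1 W p x * u1 W (g - p) x)"
    by (rule sum.mono_neutral_cong_right) auto
  have "hcoeff (\<lambda>h. ybr T x * W h g [x]) g = ybr T x * u1 W g x"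
    unfolding u1_def by (rule hcoeff_cmult[OF isp1[OF x]])
  also have "(\<lambda>h. ybr T x * W h g [x]) = (\<lambda>h. A h + B h + C h)" using L R by auto
  also have "hcoeff (\<lambda>h. A h + B h + C h) g = hcoeff A g + hcoeff B g + hcoeff C g"
    using hcoeff_add[OF isp_add[OF iA iB] iC] hcoeff_add[OF iA iB] by simp
  finally show ?thesis using hA hB hC \<open>(\<Sum>p\<le>g. _) = _\<close> by simp
qed

lemma loop_rhs_2:
  "loop_rhs W h g x [b] =
     (if 1 \<le> g then h * deriv (\<lambda>t. W h (g - 1) [t, b]) x else 0)
   + (if 2 \<le> g then W h (g - 2) [x, x, b] else 0)
   + ((\<Sum>p\<le>g. if p = 0 then 0 else W h p [x] * W h (g - p) [x, b])
     + (\<Sum>p\<le>g. if p = g then 0 else W h p [x, b] * W h (g - p) [x]))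
   + deriv (\<lambda>s. (W h g [x] - W h g [s]) / (x - s)) b"
proof -
  have P: "Pow {0::nat} = {{}, {0}}" by auto
  have PS: "(\<Sum>S\<in>Pow {0::nat}. G S) = G {} + G {0}" for G :: "nat set \<Rightarrow> complex"
    unfolding P by simp
  have m: "- {0::nat} = {n. n \<noteq> 0}" by auto
  show ?thesis unfolding loop_rhs_def by (simp add: lessThan_Suc m PS cong: if_cong)
qed

lemma sum_rev_1g: "(\<Sum>p\<le>(g::nat). if p = g then 0 else f p (g - p)) = (\<Sum>p\<in>{1..g}. f (g - p) p)"
proof -
  have "(\<Sum>p\<le>g. if p = g then 0 else f p (g - p)) = (\<Sum>p\<in>{..<g}. f p (g - p))"
    by (rule sum.mono_neutral_cong_right) auto
  also have "\<dots> = (\<Sum>p\<in>{1..g}. f (g - p) p)"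
    by (rule sum.reindex_bij_witness[of _ "\<lambda>p. g - p" "\<lambda>p. g - p"]) auto
  finally show ?thesis .
qed

lemma u2_rec:
  assumes x: "x \<in> cutdom T" and b: "b \<in> cutdom T" and xb: "x \<noteq> b"
  shows "ybr T x * u2 W g x b = (if 1 \<le> g then deriv (\<lambda>a. u2 W (g - 1) a b) x else 0)
     + 2 * (\<Sum>p\<in>{1..g}. u1 W p x * u2 W (g - p) x b)
     + deriv (\<lambda>t. (u1 W g x - u1 W g t) / (x - t)) b"
proof -
  have L: "ybr T x * W h g [x, b] = loop_rhs W h g x [b]" for h
    by (rule corr_loop[OF W]) (use x b xb in auto)
  define A where "A = (\<lambda>h. if 1 \<le> g then h * deriv (\<lambda>t. W h (g - 1) [t, b]) x else 0)"
  define B where "B = (\<lambda>h. if 2 \<le> g then W h (g - 2) [x, x, b] else 0)"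
  define C1 where "C1 = (\<lambda>h. \<Sum>p\<le>g. if p = 0 then 0 else W h p [x] * W h (g - p) [x, b])"
  define C2 where "C2 = (\<lambda>h. \<Sum>p\<le>g. if p = g then 0 else W h p [x, b] * W h (g - p) [x])"
  define D where "D = (\<lambda>h. deriv (\<lambda>s. (W h g [x] - W h g [s]) / (x - s)) b)"
  have R: "loop_rhs W h g x [b] = A h + B h + (C1 h + C2 h) + D h" for h
    unfolding loop_rhs_2 A_def B_def C1_def C2_def D_def by simp
  have iA: "isp g A" and hA: "hcoeff A g = (if 1 \<le> g then deriv (\<lambda>a. u2 W (g - 1) a b) x else 0)"
    using hc_term1[OF x, of "[b]" g] b unfolding A_def u2_def by auto
  have iB: "isp g B" and hB: "hcoeff B g = 0" using hc_term2[of "[x, x, b]" g] x b unfolding B_def by auto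
  have iC1': "isp g (\<lambda>h. if p = 0 then 0 else W h p [x] * W h (g - p) [x, b])" if "p \<in> {..g}" for p
    using isp_mult[OF isp1[OF x, of p] isp2[OF x b, of "g - p"]] that by (intro isp_if isp_const) auto
  have iC2': "isp g (\<lambda>h. if p = g then 0 else W h p [x, b] * W h (g - p) [x])" if "p \<in> {..g}" for p
    using isp_mult[OF isp2[OF x b, of p] isp1[OF x, of "g - p"]] that by (intro isp_if isp_const) auto
  have iC1: "isp g C1" unfolding C1_def by (intro isp_sum iC1') auto
  have iC2: "isp g C2" unfolding C2_def by (intro isp_sum iC2') auto
  have hC1: "hcoeff C1 g = (\<Sum>p\<le>g. if p = 0 then 0 else u1 W p x * u2 W (g - p) x b)"
    unfolding C1_def
  proof (subst hcoeff_sum[OF _ iC1'], simp, simp, intro sum.cong refl)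
    fix p assume p: "p \<in> {..g}"
    show "hcoeff (\<lambda>h. if p = 0 then 0 else W h p [x] * W h (g - p) [x, b]) g =
      (if p = 0 then 0 else u1 W p x * u2 W (g - p) x b)"
      using hcoeff_const[of 0 g] hcoeff_mult[OF isp1[OF x, of p] isp2[OF x b, of "g - p"]] p
      unfolding u1_def u2_def by (auto simp: hcoeff_if)
  qed
  have hC2: "hcoeff C2 g = (\<Sum>p\<le>g. if p = g then 0 else u2 W p x b * u1 W (g - p) x)"
    unfolding C2_def
  proof (subst hcoeff_sum[OF _ iC2'], simp, simp, intro sum.cong refl)
    fix p assume p: "p \<in> {..g}"
    show "hcoeff (\<lambda>h. if p = g then 0 else W h p [x, b] * W h (g - p) [x]) g =
      (if p = g then 0 else u2 W p x b * u1 W (g - p) x)"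
      using hcoeff_const[of 0 g] hcoeff_mult[OF isp2[OF x b, of p] isp1[OF x, of "g - p"]] p
      unfolding u1_def u2_def by (auto simp: hcoeff_if)
  qed
  have s1: "(\<Sum>p\<le>g. if p = 0 then 0 else u1 W p x * u2 W (g - p) x b) = (\<Sum>p\<in>{1..g}. u1 W p x * u2 W (g - p) x b)"
    by (rule sum.mono_neutral_cong_right) auto
  have s2: "(\<Sum>p\<le>g. if p = g then 0 else u2 W p x b * u1 W (g - p) x) = (\<Sum>p\<in>{1..g}. u1 W p x * u2 W (g - p) x b)"
    using sum_rev_1g[of g "\<lambda>p q. u2 W p x b * u1 W q x"] by (simp add: mult.commute)
  have oS: "open (cutdom T - {x})" by (intro open_Diff open_cutdom) auto
  have bS: "b \<in> cutdom T - {x}" using b xb by auto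
  have FH: "(\<lambda>s. (W h g [x] - W h g [s]) / (x - s)) holomorphic_on cutdom T - {x}" for h
  proof -
    have "(\<lambda>s. W h g [s]) holomorphic_on cutdom T - {x}"
      by (rule holomorphic_on_subset[OF corr_holo0[OF W, of "[]"]]) auto
    thus ?thesis by (intro holomorphic_intros) auto
  qed
  have FI: "isp g (\<lambda>h. (W h g [x] - W h g [s]) / (x - s))" if "s \<in> cutdom T - {x}" for s
    using that x by (intro isp_divc isp_diff isp1) auto
  have iD: "isp g D" unfolding D_def by (rule fam_deriv(1)[OF oS bS FH FI])
  have hD: "hcoeff D g = deriv (\<lambda>t. (u1 W g x - u1 W g t) / (x - t)) b"
  proof -
    have "hcoeff D g = deriv (\<lambda>s. hcoeff (\<lambda>h. (W h g [x] - W h g [s]) / (x - s)) g) b"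
      unfolding D_def by (rule fam_deriv(2)[OF oS bS FH FI])
    also have "\<dots> = deriv (\<lambda>t. (u1 W g x - u1 W g t) / (x - t)) b"
    proof (rule deriv_cong_ev[OF _ refl])
      show "eventually (\<lambda>s. hcoeff (\<lambda>h. (W h g [x] - W h g [s]) / (x - s)) g = (u1 W g x - u1 W g s) / (x - s)) (nhds b)"
        using eventually_nhds_in_open[OF oS bS]
      proof eventually_elim
        case (elim s)
        show ?case unfolding u1_def using elim x
          by (subst hcoeff_divc[OF isp_diff[OF isp1 isp1]]) (auto simp: hcoeff_diff[OF isp1 isp1])
      qed
    qed
    finally show ?thesis .
  qed
  have "hcoeff (\<lambda>h. ybr T x * W h g [x, b]) g = ybr T x * u2 W g x b"
    unfolding u2_def by (rule hcoeff_cmult[OF isp2[OF x b]])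
  also have "(\<lambda>h. ybr T x * W h g [x, b]) = (\<lambda>h. A h + B h + (C1 h + C2 h) + D h)" using L R by auto
  also have "hcoeff (\<lambda>h. A h + B h + (C1 h + C2 h) + D h) g = hcoeff A g + hcoeff B g + (hcoeff C1 g + hcoeff C2 g) + hcoeff D g"
    using hcoeff_add[OF isp_add[OF isp_add[OF iA iB] isp_add[OF iC1 iC2]] iD]
          hcoeff_add[OF isp_add[OF iA iB] isp_add[OF iC1 iC2]] hcoeff_add[OF iA iB] hcoeff_add[OF iC1 iC2] by simp
  finally show ?thesis using hA hB hC1 hC2 s1 s2 hD by simp
qed

end


definition dd :: "nat \<Rightarrow> (complex \<Rightarrow> complex) \<Rightarrow> complex \<Rightarrow> complex" where
  "dd m f b = (deriv ^^ m) f b / fact m"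

lemma dd_0: "dd 0 f b = f b" by (simp add: dd_def)

lemma dd_cong: "open S \<Longrightarrow> b \<in> S \<Longrightarrow> (\<And>x. x \<in> S \<Longrightarrow> f x = g x) \<Longrightarrow> dd m f b = dd m g b"
  unfolding dd_def
  by (subst higher_deriv_cong_ev[of f g b b m]) (auto elim!: eventually_mono[OF eventually_nhds_in_open])

context
  fixes S :: "complex set" and b :: complex
  assumes S: "open S" "b \<in> S"
begin

lemma dd_add: "f holomorphic_on S \<Longrightarrow> g holomorphic_on S \<Longrightarrow> dd m (\<lambda>w. f w + g w) b = dd m f b + dd m g b"
  unfolding dd_def using higher_deriv_add[OF _ _ S] by (simp add: add_divide_distrib)

lemma dd_diff: "f holomorphic_on S \<Longrightarrow> g holomorphic_on S \<Longrightarrow> dd m (\<lambda>w. f w - g w) b = dd m f b - dd m g b"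
  unfolding dd_def using higher_deriv_diff[OF _ _ S] by (simp add: diff_divide_distrib)

lemma dd_cmult: "f holomorphic_on S \<Longrightarrow> dd m (\<lambda>w. c * f w) b = c * dd m f b"
  unfolding dd_def using higher_deriv_cmult[OF _ S(2) S(1)] by simp

lemma dd_sum: "finite A \<Longrightarrow> (\<And>a. a \<in> A \<Longrightarrow> f a holomorphic_on S) \<Longrightarrow>
  dd m (\<lambda>w. \<Sum>a\<in>A. f a w) b = (\<Sum>a\<in>A. dd m (f a) b)"
proof (induction A rule: finite_induct)
  case empty
  show ?case unfolding dd_def by simp
next
  case (insert a A)
  have "dd m (\<lambda>w. f a w + (\<Sum>a\<in>A. f a w)) b = dd m (f a) b + dd m (\<lambda>w. \<Sum>a\<in>A. f a w) b"
    by (rule dd_add) (use insert in \<open>auto intro!: holomorphic_intros\<close>)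
  thus ?case using insert by simp
qed

lemma dd_mult: "f holomorphic_on S \<Longrightarrow> g holomorphic_on S \<Longrightarrow>
   dd m (\<lambda>w. f w * g w) b = (\<Sum>i\<le>m. dd i f b * dd (m - i) g b)"
proof -
  assume f: "f holomorphic_on S" and g: "g holomorphic_on S"
  have "dd m (\<lambda>w. f w * g w) b = (\<Sum>i = 0..m. of_nat (m choose i) * (deriv ^^ i) f b * (deriv ^^ (m-i)) g b) / fact m"
    unfolding dd_def using higher_deriv_mult[OF f g S] by simp
  also have "\<dots> = (\<Sum>i = 0..m. of_nat (m choose i) * (deriv ^^ i) f b * (deriv ^^ (m-i)) g b / fact m)"
    by (simp add: sum_divide_distrib)
  also have "\<dots> = (\<Sum>i\<le>m. dd i f b * dd (m - i) g b)"
    unfolding atLeast0AtMost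
  proof (intro sum.cong refl)
    fix i assume i: "i \<in> {..m}"
    have "(of_nat (m choose i) :: complex) = fact m / (fact i * fact (m - i))" using i by (simp add: binomial_fact)
    thus "of_nat (m choose i) * (deriv ^^ i) f b * (deriv ^^ (m-i)) g b / fact m = dd i f b * dd (m - i) g b"
      unfolding dd_def by (simp add: field_simps)
  qed
  finally show ?thesis .
qed

lemma dd_deriv: "dd m (deriv f) b = of_nat (Suc m) * dd (Suc m) f b"
proof -
  have "(deriv ^^ Suc m) f = (deriv ^^ m) (deriv f)" by (simp add: funpow_Suc_right del: funpow.simps)
  moreover have "(fact (Suc m) :: complex) = of_nat (Suc m) * fact m" by simp
  moreover have "(of_nat (Suc m) :: complex) \<noteq> 0" by (simp only: of_nat_eq_0_iff)
  ultimately show ?thesis unfolding dd_def by simp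
qed

lemma dd_lin: "dd i (\<lambda>z. z - b) b = (if i = 1 then 1 else 0)"
proof -
  have "(deriv ^^ i) (\<lambda>z. z - b) b = (deriv ^^ i) (\<lambda>z. z) b - (deriv ^^ i) (\<lambda>z. b) b"
    by (rule higher_deriv_diff[OF _ _ S]) auto
  thus ?thesis unfolding dd_def by auto
qed

lemma dd_subconst: "f holomorphic_on S \<Longrightarrow> dd (Suc m) (\<lambda>z. f z - c) b = dd (Suc m) f b"
proof -
  assume f: "f holomorphic_on S"
  have "(deriv ^^ Suc m) (\<lambda>z. f z - c) b = (deriv ^^ Suc m) f b - (deriv ^^ Suc m) (\<lambda>z. c) b"
    by (rule higher_deriv_diff[OF f _ S]) auto
  thus ?thesis unfolding dd_def by simp
qed

lemma dd_lin_mult: "g holomorphic_on S \<Longrightarrow> dd (Suc m) (\<lambda>z. (z - b) * g z) b = dd m g b"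
proof -
  assume g: "g holomorphic_on S"
  have "dd (Suc m) (\<lambda>z. (z - b) * g z) b = (\<Sum>i\<le>Suc m. dd i (\<lambda>z. z - b) b * dd (Suc m - i) g b)"
    by (rule dd_mult[OF _ g]) (auto intro: holomorphic_intros)
  also have "\<dots> = (\<Sum>i\<le>Suc m. if i = 1 then dd m g b else 0)"
    by (intro sum.cong refl) (auto simp: dd_lin)
  also have "\<dots> = dd m g b" by simp
  finally show ?thesis .
qed

definition Q1 :: "(complex \<Rightarrow> complex) \<Rightarrow> complex \<Rightarrow> complex" where
  "Q1 f = (\<lambda>z. if z = b then deriv f b else (f z - f b) / (z - b))"

lemma Q1_holo: "f holomorphic_on S \<Longrightarrow> Q1 f holomorphic_on S"
  unfolding Q1_def using pole_lemma[of f S b] S interior_open by auto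

lemma Q1_eq: "(z - b) * Q1 f z = f z - f b"
  unfolding Q1_def by auto

lemma dd_Q1: "f holomorphic_on S \<Longrightarrow> dd m (Q1 f) b = dd (Suc m) f b"
proof -
  assume f: "f holomorphic_on S"
  have "dd m (Q1 f) b = dd (Suc m) (\<lambda>z. (z - b) * Q1 f z) b" by (rule dd_lin_mult[symmetric, OF Q1_holo[OF f]])
  also have "\<dots> = dd (Suc m) (\<lambda>z. f z - f b) b" by (simp add: Q1_eq)
  also have "\<dots> = dd (Suc m) f b" by (rule dd_subconst[OF f])
  finally show ?thesis .
qed

definition Dt :: "(complex \<Rightarrow> complex) \<Rightarrow> complex \<Rightarrow> complex" where
  "Dt f = Q1 (Q1 f)"

lemma Dt_holo: "f holomorphic_on S \<Longrightarrow> Dt f holomorphic_on S"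
  unfolding Dt_def by (intro Q1_holo)

lemma dd_Dt: "f holomorphic_on S \<Longrightarrow> dd m (Dt f) b = dd (Suc (Suc m)) f b"
  unfolding Dt_def using dd_Q1 Q1_holo by simp

lemma Dt_deriv:
  assumes f: "f holomorphic_on S" and a: "a \<noteq> b"
  shows "deriv (\<lambda>t. (f a - f t) / (a - t)) b = Dt f a"
proof -
  have fd: "(f has_field_derivative deriv f b) (at b)" by (rule holomorphic_derivI[OF f S])
  have "((\<lambda>t. (f a - f t) / (a - t)) has_field_derivative
        ((- deriv f b) * (a - b) - (f a - f b) * (- 1)) / ((a - b) * (a - b))) (at b)"
    using a by (auto intro!: derivative_eq_intros fd)
  hence "deriv (\<lambda>t. (f a - f t) / (a - t)) b = ((- deriv f b) * (a - b) - (f a - f b) * (- 1)) / ((a - b) * (a - b))"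
    by (rule DERIV_imp_deriv)
  also have "\<dots> = Dt f a"
    unfolding Dt_def Q1_def using a by (simp add: field_simps)
  finally show ?thesis .
qed

end


context
  fixes T :: real and W and b
  assumes T: "T > 0" and W: "is_corr_family T W" and b: "b \<in> cutdom T"
begin

definition RH :: "nat \<Rightarrow> complex \<Rightarrow> complex" where
  "RH g a = (if 1 \<le> g then deriv (\<lambda>a. u2 W (g - 1) a b) a else 0)
     + 2 * (\<Sum>p\<in>{1..g}. u1 W p a * u2 W (g - p) a b) + Dt b (u1 W g) a"

lemma RH_holo: "RH g holomorphic_on cutdom T"
proof -
  have "(\<lambda>a. if 1 \<le> g then deriv (\<lambda>a. u2 W (g - 1) a b) a else 0) holomorphic_on cutdom T"
    by (cases "1 \<le> g") (auto intro!: holomorphic_intros u2_holo[OF T W b] open_cutdom)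
  moreover have "(\<lambda>a. \<Sum>p\<in>{1..g}. u1 W p a * u2 W (g - p) a b) holomorphic_on cutdom T"
    by (intro holomorphic_intros u1_holo[OF T W] u2_holo[OF T W b])
  moreover have "Dt b (u1 W g) holomorphic_on cutdom T"
    by (rule Dt_holo[OF open_cutdom b u1_holo[OF T W]])
  ultimately show ?thesis unfolding RH_def[abs_def] by (intro holomorphic_on_add holomorphic_on_mult holomorphic_on_const)
qed

lemma rel_all: "a \<in> cutdom T \<Longrightarrow> ybr T a * u2 W g a b = RH g a"
proof -
  have off: "ybr T a * u2 W g a b = RH g a" if a: "a \<in> cutdom T" "a \<noteq> b" for a
    using u2_rec[OF T W a(1) b a(2), of g] Dt_deriv[OF open_cutdom b u1_holo[OF T W] a(2)]
    unfolding RH_def by simp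
  assume a: "a \<in> cutdom T"
  show ?thesis
  proof (cases "a = b")
    case False thus ?thesis using off a by simp
  next
    case True
    have "(\<lambda>a. ybr T a * u2 W g a b) b = RH g b"
    proof (rule eq_by_limit[where f="\<lambda>a. ybr T a * u2 W g a b" and g="RH g"])
      show "isCont (\<lambda>a. ybr T a * u2 W g a b) b"
        by (rule isCont_holo[OF _ open_cutdom b]) (intro holomorphic_intros ybr_holo[OF T] u2_holo[OF T W b])
      show "isCont (RH g) b" by (rule isCont_holo[OF RH_holo open_cutdom b])
      show "eventually (\<lambda>a. ybr T a * u2 W g a b = RH g a) (at b)"
        using eventually_avoid[OF open_cutdom b finite.insertI[OF finite.emptyI, of b]] by eventually_elim (use off in auto)
    qed
    thus ?thesis using True by simp
  qed
qed

lemma taylor_id: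
  "(\<Sum>i\<le>m. dd i (ybr T) b * dd (m - i) (\<lambda>a. u2 W g a b) b) =
     (if 1 \<le> g then of_nat (Suc m) * dd (Suc m) (\<lambda>a. u2 W (g - 1) a b) b else 0)
   + 2 * (\<Sum>p\<in>{1..g}. \<Sum>i\<le>m. dd i (u1 W p) b * dd (m - i) (\<lambda>a. u2 W (g - p) a b) b)
   + dd (Suc (Suc m)) (u1 W g) b"
proof -
  note S = open_cutdom b
  have hu2: "\<And>g. (\<lambda>a. u2 W g a b) holomorphic_on cutdom T" by (rule u2_holo[OF T W b])
  have hu1: "\<And>g. u1 W g holomorphic_on cutdom T" by (rule u1_holo[OF T W])
  have e0: "(\<Sum>i\<le>m. dd i (ybr T) b * dd (m - i) (\<lambda>a. u2 W g a b) b) = dd m (\<lambda>a. ybr T a * u2 W g a b) b"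
    by (rule dd_mult[OF S ybr_holo[OF T] hu2, symmetric])
  have e2: "dd m (\<lambda>a. ybr T a * u2 W g a b) b = dd m (RH g) b" by (rule dd_cong[OF S rel_all])
  define A where "A = (\<lambda>a. if 1 \<le> g then deriv (\<lambda>a. u2 W (g - 1) a b) a else 0)"
  define B where "B = (\<lambda>a. 2 * (\<Sum>p\<in>{1..g}. u1 W p a * u2 W (g - p) a b))"
  have hA: "A holomorphic_on cutdom T" unfolding A_def
    by (cases "1 \<le> g") (auto intro!: holomorphic_intros hu2 open_cutdom)
  have hB: "B holomorphic_on cutdom T" unfolding B_def by (intro holomorphic_intros hu1 hu2)
  have hD: "Dt b (u1 W g) holomorphic_on cutdom T" by (rule Dt_holo[OF S hu1])
  have "RH g = (\<lambda>a. (A a + B a) + Dt b (u1 W g) a)" unfolding RH_def[abs_def] A_def B_def by simp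
  hence e1: "dd m (RH g) b = dd m A b + dd m B b + dd m (Dt b (u1 W g)) b"
    using dd_add[OF S holomorphic_on_add[OF hA hB] hD] dd_add[OF S hA hB] by simp
  have eA: "dd m A b = (if 1 \<le> g then of_nat (Suc m) * dd (Suc m) (\<lambda>a. u2 W (g - 1) a b) b else 0)"
  proof (cases "1 \<le> g")
    case True
    hence "A = deriv (\<lambda>a. u2 W (g - 1) a b)" unfolding A_def by auto
    thus ?thesis using True dd_deriv[OF S] by simp
  next
    case False
    hence "A = (\<lambda>a. 0)" unfolding A_def by auto
    thus ?thesis using False by (simp add: dd_def)
  qed
  have eB: "dd m B b = 2 * (\<Sum>p\<in>{1..g}. \<Sum>i\<le>m. dd i (u1 W p) b * dd (m - i) (\<lambda>a. u2 W (g - p) a b) b)"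
  proof -
    have "dd m B b = 2 * dd m (\<lambda>a. \<Sum>p\<in>{1..g}. u1 W p a * u2 W (g - p) a b) b"
      unfolding B_def by (rule dd_cmult[OF S]) (intro holomorphic_intros hu1 hu2)
    also have "dd m (\<lambda>a. \<Sum>p\<in>{1..g}. u1 W p a * u2 W (g - p) a b) b = (\<Sum>p\<in>{1..g}. dd m (\<lambda>a. u1 W p a * u2 W (g - p) a b) b)"
      by (rule dd_sum[OF S]) (auto intro!: holomorphic_intros hu1 hu2)
    also have "\<dots> = (\<Sum>p\<in>{1..g}. \<Sum>i\<le>m. dd i (u1 W p) b * dd (m - i) (\<lambda>a. u2 W (g - p) a b) b)"
      by (intro sum.cong refl dd_mult[OF S hu1 hu2])
    finally show ?thesis .
  qed
  have eD: "dd m (Dt b (u1 W g)) b = dd (Suc (Suc m)) (u1 W g) b" by (rule dd_Dt[OF S hu1])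
  show ?thesis using e0 e1 e2 eA eB eD by simp
qed

end


definition par :: "complex poly \<Rightarrow> nat \<Rightarrow> bool" where
  "par P e \<longleftrightarrow> (\<forall>n. odd (n + e) \<longrightarrow> coeff P n = 0)"

lemma par_cong: "par P e \<Longrightarrow> even e = even e' \<Longrightarrow> par P e'"
  unfolding par_def by auto

lemma par_0: "par 0 e" unfolding par_def by simp

lemma par_add: "par P e \<Longrightarrow> par Q e \<Longrightarrow> par (P + Q) e"
  unfolding par_def by simp

lemma par_diff: "par P e \<Longrightarrow> par Q e \<Longrightarrow> par (P - Q) e"
  unfolding par_def by simp

lemma par_smult: "par P e \<Longrightarrow> par (smult c P) e"
  unfolding par_def by simp

lemma par_mult: "par P a \<Longrightarrow> par Q b \<Longrightarrow> par (P * Q) (a + b)"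
  unfolding par_def
proof (intro allI impI)
  fix n assume P: "\<forall>n. odd (n + a) \<longrightarrow> coeff P n = 0" and Q: "\<forall>n. odd (n + b) \<longrightarrow> coeff Q n = 0"
    and n: "odd (n + (a + b))"
  have z: "coeff P i * coeff Q (n - i) = 0" if "i \<le> n" for i
  proof (cases "odd (i + a)")
    case True thus ?thesis using P by simp
  next
    case False
    hence "odd (n - i + b)" using n that by (auto simp: even_add even_diff_nat)
    thus ?thesis using Q by simp
  qed
  have "(\<Sum>i\<le>n. coeff P i * coeff Q (n - i)) = 0" by (intro sum.neutral) (use z in auto)
  thus "coeff (P * Q) n = 0" by (simp add: coeff_mult)
qed

lemma par_const: "par [:c:] 0"
  unfolding par_def by (auto simp: coeff_pCons split: nat.split)

lemma par_x: "par [:0, 1:] 1"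
  unfolding par_def by (auto simp: coeff_pCons split: nat.split)

lemma par_q: "par [:c, 0, 1:] 0"
  unfolding par_def by (auto simp: coeff_pCons split: nat.split)

lemma par_pderiv: "par P a \<Longrightarrow> par (pderiv P) (Suc a)"
  unfolding par_def by (auto simp: coeff_pderiv)

lemma par_poly: "par P e \<Longrightarrow> poly P (- z) = (-1) ^ e * poly P z"
proof -
  assume p: "par P e"
  have "poly P (- z) = (\<Sum>i\<le>degree P. coeff P i * (- z) ^ i)" by (simp add: poly_altdef)
  also have "\<dots> = (\<Sum>i\<le>degree P. (-1) ^ e * (coeff P i * z ^ i))"
  proof (intro sum.cong refl)
    fix i
    show "coeff P i * (- z) ^ i = (-1) ^ e * (coeff P i * z ^ i)"
    proof (cases "odd (i + e)")
      case True thus ?thesis using p unfolding par_def by simp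
    next
      case False
      hence "even i = even e" by auto
      hence "(-1::complex) ^ i = (-1) ^ e" by (simp add: minus_one_power_iff)
      thus ?thesis by (simp add: power_minus[of z])
    qed
  qed
  also have "\<dots> = (-1) ^ e * poly P z" by (simp add: poly_altdef sum_distrib_left)
  finally show ?thesis .
qed

definition cls :: "real \<Rightarrow> nat \<Rightarrow> nat \<Rightarrow> nat \<Rightarrow> complex \<Rightarrow> (complex \<Rightarrow> complex) \<Rightarrow> bool" where
  "cls T K D e L f \<longleftrightarrow> (\<exists>E F. degree E \<le> D - 1 \<and> degree F \<le> D \<and> par E (Suc e) \<and> par F e
     \<and> coeff E (D - 1) + coeff F D = L
     \<and> (\<forall>x\<in>cutdom T. f x = (poly E x * ybr T x + poly F x) / ybr T x ^ K))"

lemma clsI: "degree E \<le> D - 1 \<Longrightarrow> degree F \<le> D \<Longrightarrow> par E (Suc e) \<Longrightarrow> par F e \<Longrightarrow>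
   coeff E (D - 1) + coeff F D = L \<Longrightarrow> (\<And>x. x \<in> cutdom T \<Longrightarrow> f x = (poly E x * ybr T x + poly F x) / ybr T x ^ K) \<Longrightarrow>
   cls T K D e L f"
  unfolding cls_def by blast

lemma cls_eq: "cls T K D e L f \<Longrightarrow> K = K' \<Longrightarrow> D = D' \<Longrightarrow> even e = even e' \<Longrightarrow> L = L' \<Longrightarrow>
   (\<And>x. x \<in> cutdom T \<Longrightarrow> f x = g x) \<Longrightarrow> cls T K' D' e' L' g"
proof -
  assume c: "cls T K D e L f" and e: "K = K'" "D = D'" "even e = even e'" "L = L'"
    and fg: "\<And>x. x \<in> cutdom T \<Longrightarrow> f x = g x"
  then obtain E F where A: "degree E \<le> D - 1" "degree F \<le> D" "par E (Suc e)" "par F e"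
     "coeff E (D - 1) + coeff F D = L" "\<forall>x\<in>cutdom T. f x = (poly E x * ybr T x + poly F x) / ybr T x ^ K"
    unfolding cls_def by blast
  have p1: "par E (Suc e')" by (rule par_cong[OF A(3)]) (use e(3) in simp)
  have p2: "par F e'" by (rule par_cong[OF A(4)]) (use e(3) in simp)
  show ?thesis by (rule clsI[OF _ _ p1 p2]) (use A e fg in auto)
qed

lemma cls_zero: "cls T K D e 0 (\<lambda>x. 0)"
  by (rule clsI[of 0 _ 0]) (auto simp: par_0)

lemma cls_add: "cls T K D e L1 f \<Longrightarrow> cls T K D e L2 g \<Longrightarrow> cls T K D e (L1 + L2) (\<lambda>x. f x + g x)"
proof -
  assume "cls T K D e L1 f" "cls T K D e L2 g"
  then obtain E1 F1 E2 F2 where A: "degree E1 \<le> D - 1" "degree F1 \<le> D" "par E1 (Suc e)" "par F1 e"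
     "coeff E1 (D - 1) + coeff F1 D = L1" "\<forall>x\<in>cutdom T. f x = (poly E1 x * ybr T x + poly F1 x) / ybr T x ^ K"
    and B: "degree E2 \<le> D - 1" "degree F2 \<le> D" "par E2 (Suc e)" "par F2 e"
     "coeff E2 (D - 1) + coeff F2 D = L2" "\<forall>x\<in>cutdom T. g x = (poly E2 x * ybr T x + poly F2 x) / ybr T x ^ K"
    unfolding cls_def by blast
  show ?thesis
  proof (rule clsI[of "E1 + E2" _ "F1 + F2"])
    show "degree (E1 + E2) \<le> D - 1" using A B by (intro order.trans[OF degree_add_le_max]) auto
    show "degree (F1 + F2) \<le> D" using A B by (intro order.trans[OF degree_add_le_max]) auto
    show "par (E1 + E2) (Suc e)" "par (F1 + F2) e" using A B by (auto intro: par_add)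
    show "coeff (E1 + E2) (D - 1) + coeff (F1 + F2) D = L1 + L2" using A(5) B(5) by (simp add: algebra_simps)
    show "f x + g x = (poly (E1 + E2) x * ybr T x + poly (F1 + F2) x) / ybr T x ^ K" if "x \<in> cutdom T" for x
      using A(6) B(6) that by (simp add: add_divide_distrib[symmetric] algebra_simps)
  qed
qed

lemma cls_cmult: "cls T K D e L f \<Longrightarrow> cls T K D e (c * L) (\<lambda>x. c * f x)"
proof -
  assume "cls T K D e L f"
  then obtain E1 F1 where A: "degree E1 \<le> D - 1" "degree F1 \<le> D" "par E1 (Suc e)" "par F1 e"
     "coeff E1 (D - 1) + coeff F1 D = L" "\<forall>x\<in>cutdom T. f x = (poly E1 x * ybr T x + poly F1 x) / ybr T x ^ K"
    unfolding cls_def by blast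
  show ?thesis
  proof (rule clsI[of "smult c E1" _ "smult c F1"])
    show "degree (smult c E1) \<le> D - 1" using A order.trans[OF degree_smult_le] by blast
    show "degree (smult c F1) \<le> D" using A order.trans[OF degree_smult_le] by blast
    show "par (smult c E1) (Suc e)" "par (smult c F1) e" using A by (auto intro: par_smult)
    show "coeff (smult c E1) (D - 1) + coeff (smult c F1) D = c * L" using A(5) by (auto simp: algebra_simps)
    show "c * f x = (poly (smult c E1) x * ybr T x + poly (smult c F1) x) / ybr T x ^ K" if "x \<in> cutdom T" for x
      using A(6) that by (simp add: algebra_simps)
  qed
qed

lemma cls_sum: "finite A \<Longrightarrow> (\<And>a. a \<in> A \<Longrightarrow> cls T K D e (L a) (f a)) \<Longrightarrow>
   cls T K D e (\<Sum>a\<in>A. L a) (\<lambda>x. \<Sum>a\<in>A. f a x)"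
proof (induction A rule: finite_induct)
  case empty thus ?case using cls_zero by simp
next
  case (insert a A)
  have "cls T K D e (L a + (\<Sum>a\<in>A. L a)) (\<lambda>x. f a x + (\<Sum>a\<in>A. f a x))"
    by (rule cls_add) (use insert in auto)
  thus ?case using insert by simp
qed

lemma cls_divy: "T > 0 \<Longrightarrow> cls T K D e L f \<Longrightarrow> cls T (Suc K) D e L (\<lambda>x. f x / ybr T x)"
proof -
  assume T: "T > 0" and "cls T K D e L f"
  then obtain E F where A: "degree E \<le> D - 1" "degree F \<le> D" "par E (Suc e)" "par F e"
     "coeff E (D - 1) + coeff F D = L" "\<forall>x\<in>cutdom T. f x = (poly E x * ybr T x + poly F x) / ybr T x ^ K"
    unfolding cls_def by blast
  show ?thesis by (rule clsI[OF A(1-5)]) (use A(6) in \<open>auto simp: divide_divide_eq_left\<close>)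
qed


definition qpoly :: "real \<Rightarrow> complex poly" where "qpoly T = [:- 4 * complex_of_real T, 0, 1:]"

lemma poly_qpoly: "T > 0 \<Longrightarrow> x \<in> cutdom T \<Longrightarrow> poly (qpoly T) x = ybr T x ^ 2"
  using ybr_sq[OF cutdom_nz] by (simp add: qpoly_def power2_eq_square algebra_simps)

lemma degree_qpoly: "degree (qpoly T) = 2" by (simp add: qpoly_def)
lemma coeff_qpoly2: "coeff (qpoly T) 2 = 1" by (simp add: qpoly_def numeral_2_eq_2)
lemma par_qpoly: "par (qpoly T) 0" unfolding qpoly_def by (rule par_q)

lemma cls_mult:
  assumes T: "T > 0" and f: "cls T K1 D1 e1 L1 f" and g: "cls T K2 D2 e2 L2 g" and D: "D1 \<ge> 1" "D2 \<ge> 1"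
  shows "cls T (K1 + K2) (D1 + D2) (e1 + e2) (L1 * L2) (\<lambda>x. f x * g x)"
proof -
  obtain E1 F1 where A: "degree E1 \<le> D1 - 1" "degree F1 \<le> D1" "par E1 (Suc e1)" "par F1 e1"
     "coeff E1 (D1 - 1) + coeff F1 D1 = L1" "\<forall>x\<in>cutdom T. f x = (poly E1 x * ybr T x + poly F1 x) / ybr T x ^ K1"
    using f unfolding cls_def by blast
  obtain E2 F2 where B: "degree E2 \<le> D2 - 1" "degree F2 \<le> D2" "par E2 (Suc e2)" "par F2 e2"
     "coeff E2 (D2 - 1) + coeff F2 D2 = L2" "\<forall>x\<in>cutdom T. g x = (poly E2 x * ybr T x + poly F2 x) / ybr T x ^ K2"
    using g unfolding cls_def by blast
  define E where "E = E1 * F2 + E2 * F1"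
  define F where "F = F1 * F2 + E1 * E2 * qpoly T"
  have dE1: "degree (E1 * F2) \<le> D1 + D2 - 1"
    using degree_mult_le[of E1 F2] A(1) B(2) D by linarith
  have dE2: "degree (E2 * F1) \<le> D1 + D2 - 1"
    using degree_mult_le[of E2 F1] A(2) B(1) D by linarith
  have dF1: "degree (F1 * F2) \<le> D1 + D2"
    using degree_mult_le[of F1 F2] A(2) B(2) by linarith
  have dF2: "degree (E1 * E2 * qpoly T) \<le> D1 + D2"
    using degree_mult_le[of "E1 * E2" "qpoly T"] degree_mult_le[of E1 E2] A(1) B(1) D degree_qpoly[of T] by linarith
  show ?thesis
  proof (rule clsI[of E _ F])
    show "degree E \<le> D1 + D2 - 1" unfolding E_def using dE1 dE2 by (intro order.trans[OF degree_add_le_max]) auto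
    show "degree F \<le> D1 + D2" unfolding F_def using dF1 dF2 by (intro order.trans[OF degree_add_le_max]) auto
    have "par (E1 * F2) (Suc e1 + e2)" by (rule par_mult[OF A(3) B(4)])
    moreover have "par (E2 * F1) (Suc e2 + e1)" by (rule par_mult[OF B(3) A(4)])
    ultimately show "par E (Suc (e1 + e2))" unfolding E_def by (intro par_add) (auto elim: par_cong)
    have "par (F1 * F2) (e1 + e2)" by (rule par_mult[OF A(4) B(4)])
    moreover have "par (E1 * E2 * qpoly T) (Suc e1 + Suc e2 + 0)" by (intro par_mult A(3) B(3) par_qpoly)
    ultimately show "par F (e1 + e2)" unfolding F_def by (intro par_add) (auto elim: par_cong)
    have c1: "coeff (E1 * F2) (D1 + D2 - 1) = coeff E1 (D1 - 1) * coeff F2 D2"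
      using coeff_mult_top[OF A(1) B(2)] D by (simp add: add.commute add_diff_assoc2)
    have c2: "coeff (E2 * F1) (D1 + D2 - 1) = coeff E2 (D2 - 1) * coeff F1 D1"
      using coeff_mult_top[OF B(1) A(2)] D by (simp add: add.commute add_diff_assoc2)
    have c3: "coeff (F1 * F2) (D1 + D2) = coeff F1 D1 * coeff F2 D2" by (rule coeff_mult_top[OF A(2) B(2)])
    have "coeff (E1 * E2 * qpoly T) ((D1 - 1) + (D2 - 1) + 2) = coeff (E1 * E2) ((D1 - 1) + (D2 - 1)) * coeff (qpoly T) 2"
      by (rule coeff_mult_top) (use degree_mult_le[of E1 E2] A(1) B(1) degree_qpoly[of T] in auto)
    also have "coeff (E1 * E2) ((D1 - 1) + (D2 - 1)) = coeff E1 (D1 - 1) * coeff E2 (D2 - 1)"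
      by (rule coeff_mult_top[OF A(1) B(1)])
    finally have c4': "coeff (E1 * E2 * qpoly T) ((D1 - 1) + (D2 - 1) + 2) = coeff E1 (D1 - 1) * coeff E2 (D2 - 1)"
      using coeff_qpoly2[of T] by simp
    have "(D1 - 1) + (D2 - 1) + 2 = D1 + D2" using D by simp
    hence c4: "coeff (E1 * E2 * qpoly T) (D1 + D2) = coeff E1 (D1 - 1) * coeff E2 (D2 - 1)" using c4' by metis
    show "coeff E (D1 + D2 - 1) + coeff F (D1 + D2) = L1 * L2"
      unfolding E_def F_def using c1 c2 c3 c4 by (simp add: A(5)[symmetric] B(5)[symmetric] algebra_simps)
    fix x assume x: "x \<in> cutdom T"
    have y: "ybr T x \<noteq> 0" by (rule ybr_nz[OF T x])
    have "f x * g x = ((poly E1 x * ybr T x + poly F1 x) * (poly E2 x * ybr T x + poly F2 x)) / (ybr T x ^ K1 * ybr T x ^ K2)"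
      using A(6) B(6) x by simp
    also have "(poly E1 x * ybr T x + poly F1 x) * (poly E2 x * ybr T x + poly F2 x) =
       poly E x * ybr T x + poly F x"
      unfolding E_def F_def using poly_qpoly[OF T x] by (simp add: algebra_simps power2_eq_square)
    finally show "f x * g x = (poly E x * ybr T x + poly F x) / ybr T x ^ (K1 + K2)" by (simp add: power_add)
  qed
qed


lemma coeff_x_mult: "coeff ([:0, 1:] * (P :: complex poly)) (Suc n) = coeff P n"
  by (simp add: coeff_pCons)

lemma deriv_formula:
  assumes T: "T > 0" and x: "x \<in> cutdom T"
  shows "((\<lambda>x. (poly E x * ybr T x + poly F x) / ybr T x ^ K) has_field_derivative
     (poly (pderiv E * qpoly T + smult (1 - of_nat K) ([:0, 1:] * E)) x * ybr T x
      + poly (pderiv F * qpoly T - smult (of_nat K) ([:0, 1:] * F)) x) / ybr T x ^ (K + 2)) (at x)"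
proof -
  define y where "y = ybr T x"
  have y0: "y \<noteq> 0" unfolding y_def by (rule ybr_nz[OF T x])
  have q: "poly (qpoly T) x = y^2" unfolding y_def by (rule poly_qpoly[OF T x])
  have dy: "(ybr T has_field_derivative x / y) (at x)" unfolding y_def by (rule ybr_deriv(1)[OF T x])
  have D: "((\<lambda>x. (poly E x * ybr T x + poly F x) / ybr T x ^ K) has_field_derivative
     ((poly (pderiv E) x * y + poly E x * (x / y) + poly (pderiv F) x) * y ^ K
      - (poly E x * y + poly F x) * (of_nat K * (x / y) * y ^ (K - 1))) / (y ^ K * y ^ K)) (at x)"
    unfolding y_def
    by (rule derivative_eq_intros poly_DERIV dy[unfolded y_def] refl | simp add: y0[unfolded y_def] mult_ac)+
  have Eq: "((poly (pderiv E) x * y + poly E x * (x / y) + poly (pderiv F) x) * y ^ K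
      - (poly E x * y + poly F x) * (of_nat K * (x / y) * y ^ (K - 1))) / (y ^ K * y ^ K) =
      (poly (pderiv E * qpoly T + smult (1 - of_nat K) ([:0, 1:] * E)) x * y
      + poly (pderiv F * qpoly T - smult (of_nat K) ([:0, 1:] * F)) x) / y ^ (K + 2)"
  proof (cases K)
    case 0 thus ?thesis using y0 q by (simp add: field_simps power2_eq_square)
  next
    case (Suc k) thus ?thesis using y0 q by (simp add: field_simps power2_eq_square)
  qed
  show ?thesis using DERIV_cong[OF D Eq] unfolding y_def .
qed


lemma coeff_pderiv_q:
  assumes "degree (P :: complex poly) \<le> D - 1" "D \<ge> 1"
  shows "coeff (pderiv P * qpoly T) D = of_nat (D - 1) * coeff P (D - 1)"
proof (cases "D \<ge> 2")
  case True
  have dP: "degree (pderiv P) \<le> D - 2" using assms degree_pderiv[of P] by simp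
  have "coeff (pderiv P * qpoly T) ((D - 2) + 2) = coeff (pderiv P) (D - 2) * coeff (qpoly T) 2"
    by (rule coeff_mult_top[OF dP]) (simp add: degree_qpoly)
  moreover have "(D - 2) + 2 = D" "Suc (D - 2) = D - 1" using True by auto
  ultimately show ?thesis by (simp add: coeff_qpoly2 coeff_pderiv)
next
  case False
  hence "D = 1" using assms by simp
  hence "degree P = 0" using assms by simp
  hence "pderiv P = 0" by (simp add: pderiv_eq_0_iff)
  thus ?thesis using \<open>D = 1\<close> by simp
qed

lemma cls_deriv:
  assumes T: "T > 0" and f: "cls T K D e L f" and D: "D \<ge> 1"
  shows "cls T (K + 2) (D + 1) (Suc e) ((of_nat D - of_nat K) * L) (deriv f)"
proof -
  obtain E F where A: "degree E \<le> D - 1" "degree F \<le> D" "par E (Suc e)" "par F e"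
     "coeff E (D - 1) + coeff F D = L" "\<forall>x\<in>cutdom T. f x = (poly E x * ybr T x + poly F x) / ybr T x ^ K"
    using f unfolding cls_def by blast
  define E' where "E' = pderiv E * qpoly T + smult (1 - of_nat K) ([:0, 1:] * E)"
  define F' where "F' = pderiv F * qpoly T - smult (of_nat K) ([:0, 1:] * F)"
  show ?thesis
  proof (rule clsI[of E' _ F'])
    have d1: "degree (pderiv E * qpoly T) \<le> D"
    proof (cases "pderiv E = 0")
      case False
      hence "degree E \<ge> 1" using pderiv_eq_0_iff[of E] by simp
      thus ?thesis using degree_mult_le[of "pderiv E" "qpoly T"] degree_pderiv[of E] A(1) degree_qpoly[of T] by linarith
    qed simp
    have d2: "degree ([:0, 1:] * E) \<le> D" using degree_mult_le[of "[:0, 1:]" E] A(1) D by simp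
    show "degree E' \<le> D + 1 - 1" unfolding E'_def
      using d1 d2 by (intro order.trans[OF degree_add_le_max]) (auto intro: order.trans[OF degree_smult_le])
    have d3: "degree (pderiv F * qpoly T) \<le> D + 1"
    proof (cases "pderiv F = 0")
      case False
      hence "degree F \<ge> 1" using pderiv_eq_0_iff[of F] by simp
      thus ?thesis using degree_mult_le[of "pderiv F" "qpoly T"] degree_pderiv[of F] A(2) degree_qpoly[of T] by linarith
    qed simp
    have d4: "degree ([:0, 1:] * F) \<le> D + 1" using degree_mult_le[of "[:0, 1:]" F] A(2) by simp
    show "degree F' \<le> D + 1" unfolding F'_def
      using d3 d4 by (intro order.trans[OF degree_diff_le_max]) (auto intro: order.trans[OF degree_smult_le])
    have "par (pderiv E * qpoly T) (Suc (Suc e) + 0)" by (intro par_mult par_pderiv A(3) par_qpoly)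
    moreover have "par ([:0, 1:] * E) (1 + Suc e)" by (intro par_mult par_x A(3))
    ultimately show "par E' (Suc (Suc e))" unfolding E'_def by (intro par_add par_smult) (auto elim: par_cong)
    have "par (pderiv F * qpoly T) (Suc e + 0)" by (intro par_mult par_pderiv A(4) par_qpoly)
    moreover have "par ([:0, 1:] * F) (1 + e)" by (intro par_mult par_x A(4))
    ultimately show "par F' (Suc e)" unfolding F'_def by (intro par_diff par_smult) (auto elim: par_cong)
    have c1: "coeff (pderiv E * qpoly T) D = of_nat (D - 1) * coeff E (D - 1)" by (rule coeff_pderiv_q[OF A(1) D])
    have c2: "coeff (pderiv F * qpoly T) (D + 1) = of_nat D * coeff F D" using coeff_pderiv_q[of F "D + 1" T] A(2) by simp
    have c3: "coeff ([:0, 1:] * E) D = coeff E (D - 1)" using coeff_x_mult[of E "D - 1"] D by simp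
    have c4: "coeff ([:0, 1:] * F) (D + 1) = coeff F D" using coeff_x_mult[of F D] by simp
    have oD: "(of_nat (D - 1) :: complex) = of_nat D - 1" using D by (simp add: of_nat_diff)
    have cE: "coeff E' D = of_nat (D - 1) * coeff E (D - 1) + (1 - of_nat K) * coeff E (D - 1)"
      unfolding E'_def using c1 c3 by (simp only: coeff_add coeff_smult)
    have cF: "coeff F' (D + 1) = of_nat D * coeff F D - of_nat K * coeff F D"
      unfolding F'_def using c2 c4 by (simp only: coeff_diff coeff_smult)
    show "coeff E' (D + 1 - 1) + coeff F' (D + 1) = (of_nat D - of_nat K) * L"
    proof -
      have "coeff E' (D + 1 - 1) + coeff F' (D + 1) = (of_nat D - 1) * coeff E (D - 1) + (1 - of_nat K) * coeff E (D - 1)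
           + (of_nat D * coeff F D - of_nat K * coeff F D)" using cE cF oD by simp
      also have "\<dots> = (of_nat D - of_nat K) * (coeff E (D - 1) + coeff F D)" by (simp add: algebra_simps)
      finally show ?thesis using A(5) by simp
    qed
    fix x assume x: "x \<in> cutdom T"
    have "deriv f x = deriv (\<lambda>x. (poly E x * ybr T x + poly F x) / ybr T x ^ K) x"
      by (rule deriv_cong_ev[OF _ refl]) (use eventually_nhds_in_open[OF open_cutdom x] A(6) in \<open>auto elim!: eventually_mono\<close>)
    also have "\<dots> = (poly E' x * ybr T x + poly F' x) / ybr T x ^ (K + 2)"
      unfolding E'_def F'_def by (rule DERIV_imp_deriv[OF deriv_formula[OF T x]])
    finally show "deriv f x = (poly E' x * ybr T x + poly F' x) / ybr T x ^ (K + 2)" .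
  qed
qed

lemma cls_hderiv:
  assumes T: "T > 0" and f: "cls T K D e 0 f" and D: "D \<ge> 1"
  shows "cls T (K + 2 * k) (D + k) (e + k) 0 ((deriv ^^ k) f)"
proof (induction k)
  case 0 thus ?case using f by simp
next
  case (Suc k)
  have "cls T (K + 2 * k + 2) (D + k + 1) (Suc (e + k)) ((of_nat (D + k) - of_nat (K + 2 * k)) * 0) (deriv ((deriv ^^ k) f))"
    by (rule cls_deriv[OF T Suc.IH]) (use D in simp)
  thus ?case by simp
qed


lemma cls_diff: "cls T K D e L1 f \<Longrightarrow> cls T K D e L2 g \<Longrightarrow> cls T K D e (L1 - L2) (\<lambda>x. f x - g x)"
  using cls_add[of T K D e L1 f "(-1) * L2" "\<lambda>x. (-1) * g x"] cls_cmult[of T K D e L2 g "-1"] by simp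

context
  fixes T :: real and W
  assumes T: "T > 0" and W: "is_corr_family T W"
begin

lemma cls_Y1: "cls T 1 1 1 1 (deriv (ybr T))"
proof (rule clsI[of 0 _ "[:0, 1:]"])
  show "par 0 (Suc 1)" by (rule par_0)
  show "par [:0, 1:] 1" by (rule par_x)
  fix x assume x: "x \<in> cutdom T"
  show "deriv (ybr T) x = (poly 0 x * ybr T x + poly [:0, 1:] x) / ybr T x ^ 1"
    using ybr_deriv(2)[OF T x] by simp
qed auto

lemma cls_Y: "k \<ge> 1 \<Longrightarrow> cls T (2 * k - 1) k k (if k = 1 then 1 / fact k else 0) (\<lambda>b. dd k (ybr T) b)"
proof -
  assume k: "k \<ge> 1"
  have "cls T (2 * k - 1) k k (if k = 1 then 1 else 0) ((deriv ^^ k) (ybr T))"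
  proof (cases "k = 1")
    case True thus ?thesis using cls_Y1 by simp
  next
    case False
    then obtain j where j: "k = Suc (Suc j)" using k by (cases k; cases "k - 1") auto
    have c2: "cls T (1 + 2) (1 + 1) (Suc 1) ((of_nat 1 - of_nat 1) * 1) (deriv (deriv (ybr T)))"
      by (rule cls_deriv[OF T cls_Y1]) simp
    have "cls T (3 + 2 * j) (2 + j) (2 + j) 0 ((deriv ^^ j) (deriv (deriv (ybr T))))"
      by (rule cls_hderiv[OF T]) (use c2 in \<open>auto elim!: cls_eq\<close>)
    moreover have "(deriv ^^ k) (ybr T) = (deriv ^^ j) (deriv (deriv (ybr T)))"
      unfolding j by (simp add: funpow_Suc_right del: funpow.simps)
    ultimately show ?thesis using j False by (auto elim!: cls_eq)
  qed
  from cls_cmult[OF this, of "1 / fact k"] show ?thesis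
    unfolding dd_def[abs_def] by (auto elim!: cls_eq)
qed

lemma cls_du10: "cls T 1 1 1 0 (deriv (u1 W 0))"
proof (rule clsI[of "[:1/2:]" _ "[:0, -1/2:]"])
  show "par [:1/2:] (Suc 1)" by (rule par_cong[OF par_const]) simp
  show "par [:0, -1/2:] 1" using par_smult[OF par_x, of "-1/2"] by simp
  fix x assume x: "x \<in> cutdom T"
  have "deriv (u1 W 0) x = deriv (\<lambda>x. (x - ybr T x) / 2) x"
    by (rule deriv_cong_ev[OF _ refl]) (use eventually_nhds_in_open[OF open_cutdom x] u1_0[OF T W] in \<open>auto elim!: eventually_mono\<close>)
  also have "\<dots> = (1 - x / ybr T x) / 2"
    by (rule DERIV_imp_deriv) (auto intro!: derivative_eq_intros ybr_deriv(1)[OF T x])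
  also have "\<dots> = (poly [:1/2:] x * ybr T x + poly [:0, -1/2:] x) / ybr T x ^ 1"
    using ybr_nz[OF T x] by (simp add: field_simps)
  finally show "deriv (u1 W 0) x = (poly [:1/2:] x * ybr T x + poly [:0, -1/2:] x) / ybr T x ^ 1" .
qed auto

lemma cls_u1: "p \<ge> 1 \<Longrightarrow> cls T (3 * p - 1) p p 0 (u1 W p)"
proof (induction p rule: less_induct)
  case (less p)
  show ?case
  proof (cases "p = 1")
    case True
    have "cls T (Suc 1) 1 1 0 (\<lambda>x. deriv (u1 W 0) x / ybr T x)" by (rule cls_divy[OF T cls_du10])
    moreover have "u1 W 1 x = deriv (u1 W 0) x / ybr T x" if "x \<in> cutdom T" for x
      using u1_rec[OF T W that, of 1] ybr_nz[OF T that] by (simp add: field_simps)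
    ultimately show ?thesis using True by (auto elim!: cls_eq)
  next
    case False
    then obtain q where q: "p = Suc q" "q \<ge> 1" using less.prems by (cases p) auto
    have a: "cls T (3 * q - 1 + 2) (q + 1) (Suc q) ((of_nat q - of_nat (3 * q - 1)) * 0) (deriv (u1 W q))"
      by (rule cls_deriv[OF T less.IH]) (use q in auto)
    have b: "cls T (3 * q + 1) (q + 1) (q + 1) 0 (\<lambda>x. \<Sum>r\<in>{1..<p}. u1 W r x * u1 W (p - r) x)"
    proof -
      have "cls T (3 * q + 1) (q + 1) (q + 1) (\<Sum>r\<in>{1..<p}. 0) (\<lambda>x. \<Sum>r\<in>{1..<p}. u1 W r x * u1 W (p - r) x)"
      proof (rule cls_sum)
        fix r assume r: "r \<in> {1..<p}"
        have "cls T ((3 * r - 1) + (3 * (p - r) - 1)) (r + (p - r)) (r + (p - r)) (0 * 0) (\<lambda>x. u1 W r x * u1 W (p - r) x)"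
          by (rule cls_mult[OF T less.IH less.IH]) (use r in auto)
        thus "cls T (3 * q + 1) (q + 1) (q + 1) 0 (\<lambda>x. u1 W r x * u1 W (p - r) x)"
          by (rule cls_eq) (use r q in auto)
      qed simp
      thus ?thesis by simp
    qed
    have c: "cls T (3 * q + 1) (q + 1) (q + 1) 0 (\<lambda>x. deriv (u1 W q) x + (\<Sum>r\<in>{1..<p}. u1 W r x * u1 W (p - r) x))"
      using cls_add[OF cls_eq[OF a _ _ _ _ refl] b] q by auto
    have "cls T (Suc (3 * q + 1)) (q + 1) (q + 1) 0 (\<lambda>x. (deriv (u1 W q) x + (\<Sum>r\<in>{1..<p}. u1 W r x * u1 W (p - r) x)) / ybr T x)"
      by (rule cls_divy[OF T c])
    moreover have "u1 W p x = (deriv (u1 W q) x + (\<Sum>r\<in>{1..<p}. u1 W r x * u1 W (p - r) x)) / ybr T x" if "x \<in> cutdom T" for x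
      using u1_rec[OF T W that, of p] ybr_nz[OF T that] q by (simp add: field_simps)
    ultimately show ?thesis using q by (auto elim!: cls_eq)
  qed
qed

lemma cls_U: "p \<ge> 1 \<or> k \<ge> 1 \<Longrightarrow> cls T (3 * p + 2 * k - 1) (p + k) (p + k) 0 (\<lambda>b. dd k (u1 W p) b)"
proof -
  assume pk: "p \<ge> 1 \<or> k \<ge> 1"
  have "cls T (3 * p + 2 * k - 1) (p + k) (p + k) 0 ((deriv ^^ k) (u1 W p))"
  proof (cases "p \<ge> 1")
    case True
    have "cls T (3 * p - 1 + 2 * k) (p + k) (p + k) 0 ((deriv ^^ k) (u1 W p))"
      by (rule cls_hderiv[OF T cls_u1[OF True]]) (use True in simp)
    thus ?thesis using True by (auto elim!: cls_eq)
  next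
    case False
    hence p0: "p = 0" and k: "k \<ge> 1" using pk by auto
    then obtain j where j: "k = Suc j" by (cases k) auto
    have "cls T (1 + 2 * j) (1 + j) (1 + j) 0 ((deriv ^^ j) (deriv (u1 W 0)))"
      by (rule cls_hderiv[OF T cls_du10]) simp
    moreover have "(deriv ^^ k) (u1 W 0) = (deriv ^^ j) (deriv (u1 W 0))"
      unfolding j by (simp add: funpow_Suc_right del: funpow.simps)
    ultimately show ?thesis using p0 j by (auto elim!: cls_eq)
  qed
  from cls_cmult[OF this, of "1 / fact k"] show ?thesis unfolding dd_def[abs_def] by (auto elim!: cls_eq)
qed

lemma cls_C: "cls T (3 * g + 2 * m + 4) (g + m + 2) (g + m) 0 (\<lambda>b. dd m (\<lambda>a. u2 W g a b) b)"
proof (induction g arbitrary: m rule: less_induct)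
  case (less g)
  note IHg = less.IH
  show ?case
  proof (induction m rule: less_induct)
    case (less m)
    note IHm = less.IH
    define C where "C = (\<lambda>g m b. dd m (\<lambda>a. u2 W g a b) b)"
    define K0 where "K0 = 3 * g + 2 * m + 3"
    define D0 where "D0 = g + m + 2"
    define e0 where "e0 = g + m"
    define T1 where "T1 = (\<lambda>b. if 1 \<le> g then of_nat (Suc m) * C (g - 1) (Suc m) b else 0)"
    define T2 where "T2 = (\<lambda>b. 2 * (\<Sum>p\<in>{1..g}. \<Sum>i\<le>m. dd i (u1 W p) b * C (g - p) (m - i) b))"
    define T3 where "T3 = (\<lambda>b. dd (Suc (Suc m)) (u1 W g) b)"
    define S where "S = (\<lambda>b. \<Sum>j<m. dd (Suc j) (ybr T) b * C g (m - Suc j) b)"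
    have cT1: "cls T K0 D0 e0 0 T1"
    proof (cases "1 \<le> g")
      case True
      have "cls T (3 * (g - 1) + 2 * Suc m + 4) (g - 1 + Suc m + 2) (g - 1 + Suc m) 0 (C (g - 1) (Suc m))"
        unfolding C_def using IHg[of "g - 1" "Suc m"] True by simp
      from cls_cmult[OF this, of "of_nat (Suc m)"] show ?thesis
        unfolding T1_def K0_def D0_def e0_def using True by (auto elim!: cls_eq)
    next
      case False thus ?thesis unfolding T1_def using cls_zero by simp
    qed
    have cT2: "cls T K0 D0 e0 0 T2"
    proof -
      have "cls T K0 D0 e0 (\<Sum>p\<in>{1..g}. \<Sum>i\<le>m. 0) (\<lambda>b. \<Sum>p\<in>{1..g}. \<Sum>i\<le>m. dd i (u1 W p) b * C (g - p) (m - i) b)"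
      proof (intro cls_sum finite_atLeastAtMost finite_atMost)
        fix p i assume p: "p \<in> {1..g}" and i: "i \<in> {..m}"
        have a: "cls T (3 * p + 2 * i - 1) (p + i) (p + i) 0 (\<lambda>b. dd i (u1 W p) b)" by (rule cls_U) (use p in auto)
        have b: "cls T (3 * (g - p) + 2 * (m - i) + 4) (g - p + (m - i) + 2) (g - p + (m - i)) 0 (C (g - p) (m - i))"
          unfolding C_def by (rule IHg) (use p in auto)
        from cls_mult[OF T a b] show "cls T K0 D0 e0 0 (\<lambda>b. dd i (u1 W p) b * C (g - p) (m - i) b)"
          unfolding K0_def D0_def e0_def by (rule cls_eq) (use p i in auto)
      qed
      from cls_cmult[OF this, of 2] show ?thesis unfolding T2_def by simp
    qed
    have cT3: "cls T K0 D0 e0 0 T3"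
      unfolding T3_def K0_def D0_def e0_def by (rule cls_eq[OF cls_U[of g "Suc (Suc m)"]]) auto
    have cS: "cls T K0 D0 e0 0 S"
    proof -
      have "cls T K0 D0 e0 (\<Sum>j<m. 0) S"
        unfolding S_def
      proof (intro cls_sum finite_lessThan)
        fix j assume j: "j \<in> {..<m}"
        have a: "cls T (2 * Suc j - 1) (Suc j) (Suc j) (if Suc j = 1 then 1 / fact (Suc j) else 0) (\<lambda>b. dd (Suc j) (ybr T) b)"
          by (rule cls_Y) simp
        have b: "cls T (3 * g + 2 * (m - Suc j) + 4) (g + (m - Suc j) + 2) (g + (m - Suc j)) 0 (C g (m - Suc j))"
          unfolding C_def by (rule IHm) (use j in auto)
        from cls_mult[OF T a b] show "cls T K0 D0 e0 0 (\<lambda>b. dd (Suc j) (ybr T) b * C g (m - Suc j) b)"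
          unfolding K0_def D0_def e0_def by (rule cls_eq) (use j in auto)
      qed
      thus ?thesis by simp
    qed
    have cR: "cls T K0 D0 e0 (0 + 0 + 0 - 0) (\<lambda>b. T1 b + T2 b + T3 b - S b)"
      by (intro cls_diff cls_add cT1 cT2 cT3 cS)
    have cF: "cls T (Suc K0) D0 e0 0 (\<lambda>b. (T1 b + T2 b + T3 b - S b) / ybr T b)"
      using cls_divy[OF T cR] by simp
    have eq: "C g m b = (T1 b + T2 b + T3 b - S b) / ybr T b" if b: "b \<in> cutdom T" for b
    proof -
      have tid: "(\<Sum>i\<le>m. dd i (ybr T) b * C g (m - i) b) = T1 b + T2 b + T3 b"
        unfolding T1_def T2_def T3_def C_def by (rule taylor_id[OF T W b])
      have "(\<Sum>i\<le>m. dd i (ybr T) b * C g (m - i) b) = dd 0 (ybr T) b * C g (m - 0) b + S b"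
        unfolding S_def by (rule sum.atMost_shift)
      hence "ybr T b * C g m b + S b = T1 b + T2 b + T3 b" using tid by (simp add: dd_0)
      thus ?thesis using ybr_nz[OF T b] by (simp add: field_simps)
    qed
    show ?case using cls_eq[OF cF, of "3 * g + 2 * m + 4" "g + m + 2" "g + m" 0 "C g m"] eq
      unfolding K0_def D0_def e0_def C_def by simp
  qed
qed

end

theorem main:
  fixes T :: real and W :: "complex \<Rightarrow> nat \<Rightarrow> complex list \<Rightarrow> complex" and g :: nat
  assumes "T > 0" and "is_corr_family T W" and "g \<ge> 1"
  shows "\<exists>E F :: complex poly.
           degree E \<le> g + 1 \<and> degree F \<le> g + 2
         \<and> (\<forall>z. poly E (- z) = (-1) ^ (g + 1) * poly E z)
         \<and> (\<forall>z. poly F (- z) = (-1) ^ g * poly F z)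
         \<and> coeff E (g + 1) = - coeff F (g + 2)
         \<and> (\<forall>x\<in>cutdom T. w20 W g x = poly E x / ybr T x ^ (3 * g + 3) + poly F x / ybr T x ^ (3 * g + 4))"
proof -
  have c: "cls T (3 * g + 2 * 0 + 4) (g + 0 + 2) (g + 0) 0 (\<lambda>b. dd 0 (\<lambda>a. u2 W g a b) b)"
    by (rule cls_C[OF assms(1,2)])
  then obtain E F where A: "degree E \<le> g + 1" "degree F \<le> g + 2" "par E (Suc g)" "par F g"
     "coeff E (g + 1) + coeff F (g + 2) = 0"
     "\<forall>x\<in>cutdom T. dd 0 (\<lambda>a. u2 W g a x) x = (poly E x * ybr T x + poly F x) / ybr T x ^ (3 * g + 4)"
    unfolding cls_def by auto
  show ?thesis
  proof (intro exI conjI allI ballI)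
    show "degree E \<le> g + 1" "degree F \<le> g + 2" by (fact A(1), fact A(2))
    show "poly E (- z) = (-1) ^ (g + 1) * poly E z" for z using par_poly[OF A(3)] by simp
    show "poly F (- z) = (-1) ^ g * poly F z" for z using par_poly[OF A(4)] by simp
    show "coeff E (g + 1) = - coeff F (g + 2)" using A(5) by (simp add: eq_neg_iff_add_eq_0)
    fix x assume x: "x \<in> cutdom T"
    have "w20 W g x = dd 0 (\<lambda>a. u2 W g a x) x" by (simp add: dd_0 w20_def u2_def)
    also have "\<dots> = (poly E x * ybr T x + poly F x) / ybr T x ^ (3 * g + 4)" using A(6) x by simp
    also have "\<dots> = poly E x / ybr T x ^ (3 * g + 3) + poly F x / ybr T x ^ (3 * g + 4)"
    proof -
      have p: "ybr T x ^ (3 * g + 4) = ybr T x * ybr T x ^ (3 * g + 3)"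
        using power_Suc[of "ybr T x" "3 * g + 3"] by (simp add: add.commute)
      show ?thesis unfolding p using ybr_nz[OF assms(1) x] by (simp add: field_simps)
    qed
    finally show "w20 W g x = poly E x / ybr T x ^ (3 * g + 3) + poly F x / ybr T x ^ (3 * g + 4)" .
  qed
qed


theorem theorem1:
  fixes T :: real and W :: "complex \<Rightarrow> nat \<Rightarrow> complex list \<Rightarrow> complex" and g :: nat
  assumes "T > 0" and "is_corr_family T W" and "g \<ge> 1"
  shows "\<exists>E F :: complex poly.
           degree E \<le> g + 1 \<and> degree F \<le> g + 2
         \<and> (\<forall>z. poly E (- z) = (-1) ^ (g + 1) * poly E z)
         \<and> (\<forall>z. poly F (- z) = (-1) ^ g * poly F z)
         \<and> coeff E (g + 1) = - coeff F (g + 2)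
         \<and> (\<forall>x\<in>cutdom T. w20 W g x = poly E x / ybr T x ^ (3 * g + 3) + poly F x / ybr T x ^ (3 * g + 4))"
    using main[OF assms] .

end
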